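(* Let $g\ge1$ and $n\ge 3$. In $B_n(\Sigma_g)/\Gamma_3(B_n(\Sigma_g))$ all the classes of $\sigma_1,\dots,\sigma_{n-1}$ coincide; call this class $\sigma$, and denote the classes of $a_i,b_i$ again by $a_i,b_i$. Then $B_n(\Sigma_g)/\Gamma_3(B_n(\Sigma_g))$ is isomorphic to a semidirect product $(\mathbb{Z}\times\mathbb{Z}^g)\rtimes\mathbb{Z}^g$, where the first factor $\mathbb{Z}$ is central and generated by $\sigma$, the factor $\mathbb{Z}^g$ is (freely abelian) generated by $a_1,\dots,a_g$, and the acting factor $\mathbb{Z}^g$ is generated by $b_1,\dots,b_g$, the action being given by $b_j a_l b_j^{-1}=a_l$ for $l\neq j$ and $b_j a_j b_j^{-1}=\sigma^{-2}a_j$ (and $b_j\sigma b_j^{-1}=\sigma$). In particular it is a central extension of $\mathbb{Z}^{2g}$ by $\mathbb{Z}$, and every element can be written uniquely as $\sigma^p\prod_{i=1}^g a_i^{m_i}\prod_{i=1}^g b_i^{n_i}$ with $p,m_i,n_i\in\mathbb{Z}$.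
   Context: $\Sigma_g$ is a compact connected orientable surface of genus $g\ge1$ with one boundary component; $B_n(\Sigma_g)=\pi_1(F_n(\Sigma_g)/S_n)$ where $F_n(\Sigma_g)$ is the space of ordered $n$-tuples of distinct points. $\Gamma_1(G)=G$, $\Gamma_i(G)=[G,\Gamma_{i-1}(G)]$. $B_n(\Sigma_g)$ has the presentation with generators $\sigma_1,\dots,\sigma_{n-1},a_1,b_1,\dots,a_g,b_g$ and relations: $\sigma_i\sigma_j=\sigma_j\sigma_i$ for $|i-j|\ge2$; $\sigma_i\sigma_{i+1}\sigma_i=\sigma_{i+1}\sigma_i\sigma_{i+1}$ for $1\le i\le n-2$; $c\,\sigma_j=\sigma_j c$ for $c\in\{a_i,b_i\}$, $j\ge2$; $c\sigma_1c\sigma_1=\sigma_1c\sigma_1c$ for $c\in\{a_i,b_i\}$; $a_i\sigma_1b_i=\sigma_1b_i\sigma_1a_i\sigma_1$; $c_i(\sigma_1^{-1}c_j\sigma_1)=(\sigma_1^{-1}c_j\sigma_1)c_i$ for $c_i\in\{a_i,b_i\}$, $c_j\in\{a_j,b_j\}$, $1\le j<i\le g$. *)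

theory Defs
  imports "HOL-Algebra.Algebra"
begin

text \<open>Words over an alphabet: letters are pairs (x, e), e = False for x, e = True for x inverse.\<close>

type_synonym 'g word = "('g \<times> bool) list"

text \<open>The congruence on words generated by free cancellation and the relations R
  (pairs (u, v) meaning u = v).\<close>

inductive peq :: "('g word \<times> 'g word) set \<Rightarrow> 'g word \<Rightarrow> 'g word \<Rightarrow> bool"
  for R where
  peq_refl: "peq R w w"
| peq_sym: "peq R u w \<Longrightarrow> peq R w u"
| peq_trans: "peq R u v \<Longrightarrow> peq R v w \<Longrightarrow> peq R u w"
| peq_cancel: "peq R [(x, e), (x, \<not> e)] []"
| peq_rel: "(u, w) \<in> R \<Longrightarrow> peq R u w"
| peq_cong: "peq R u u' \<Longrightarrow> peq R w w' \<Longrightarrow> peq R (u @ w) (u' @ w')"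

definition word_class :: "('g word \<times> 'g word) set \<Rightarrow> 'g word \<Rightarrow> 'g word set" where
  "word_class R w = {v. peq R w v}"

definition presented_group :: "'g set \<Rightarrow> ('g word \<times> 'g word) set \<Rightarrow> 'g word set monoid" where
  "presented_group S R =
     \<lparr> carrier = {word_class R w | w. fst ` set w \<subseteq> S},
       monoid.mult = (\<lambda>P Q. word_class R ((SOME u. u \<in> P) @ (SOME v. v \<in> Q))),
       one = word_class R [] \<rparr>"

definition pgen :: "('g word \<times> 'g word) set \<Rightarrow> 'g \<Rightarrow> 'g word set" where
  "pgen R x = word_class R [(x, False)]"

text \<open>lcs G k is Gamma_(k+1)(G): Gamma_1 = G, Gamma_(i+1) = [G, Gamma_i].\<close>

fun lcs :: "('a, 'b) monoid_scheme \<Rightarrow> nat \<Rightarrow> 'a set" where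
  "lcs G 0 = carrier G"
| "lcs G (Suc k) = generate G
     {x \<otimes>\<^bsub>G\<^esub> y \<otimes>\<^bsub>G\<^esub> inv\<^bsub>G\<^esub> x \<otimes>\<^bsub>G\<^esub> inv\<^bsub>G\<^esub> y | x y. x \<in> carrier G \<and> y \<in> lcs G k}"

definition Gamma :: "('a, 'b) monoid_scheme \<Rightarrow> nat \<Rightarrow> 'a set" where
  "Gamma G i = lcs G (i - 1)"

section \<open>Surface braid group B_n(Sigma_g), Sigma_g with one boundary component\<close>

datatype bgen = Sig nat | A nat | B nat

definition bgens :: "nat \<Rightarrow> nat \<Rightarrow> bgen set" where
  "bgens n g = {Sig i | i. 1 \<le> i \<and> i \<le> n - 1} \<union> {A i | i. 1 \<le> i \<and> i \<le> g} \<union> {B i | i. 1 \<le> i \<and> i \<le> g}"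

abbreviation lt :: "bgen \<Rightarrow> bgen word" where "lt x \<equiv> [(x, False)]"
abbreviation lti :: "bgen \<Rightarrow> bgen word" where "lti x \<equiv> [(x, True)]"

definition braid_rels :: "nat \<Rightarrow> nat \<Rightarrow> (bgen word \<times> bgen word) set" where
  "braid_rels n g =
     {(lt (Sig i) @ lt (Sig j), lt (Sig j) @ lt (Sig i)) | i j.
        1 \<le> i \<and> i \<le> n - 1 \<and> 1 \<le> j \<and> j \<le> n - 1 \<and> (i \<ge> j + 2 \<or> j \<ge> i + 2)}
   \<union> {(lt (Sig i) @ lt (Sig (i+1)) @ lt (Sig i), lt (Sig (i+1)) @ lt (Sig i) @ lt (Sig (i+1))) | i.
        1 \<le> i \<and> i \<le> n - 2}
   \<union> {(lt c @ lt (Sig j), lt (Sig j) @ lt c) | c i j.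
        1 \<le> i \<and> i \<le> g \<and> c \<in> {A i, B i} \<and> 2 \<le> j \<and> j \<le> n - 1}
   \<union> {(lt c @ lt (Sig 1) @ lt c @ lt (Sig 1), lt (Sig 1) @ lt c @ lt (Sig 1) @ lt c) | c i.
        1 \<le> i \<and> i \<le> g \<and> c \<in> {A i, B i}}
   \<union> {(lt (A i) @ lt (Sig 1) @ lt (B i),
        lt (Sig 1) @ lt (B i) @ lt (Sig 1) @ lt (A i) @ lt (Sig 1)) | i. 1 \<le> i \<and> i \<le> g}
   \<union> {(lt ci @ lti (Sig 1) @ lt cj @ lt (Sig 1), lti (Sig 1) @ lt cj @ lt (Sig 1) @ lt ci) | ci cj i j.
        1 \<le> j \<and> j < i \<and> i \<le> g \<and> ci \<in> {A i, B i} \<and> cj \<in> {A j, B j}}"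

definition braid_group :: "nat \<Rightarrow> nat \<Rightarrow> bgen word set monoid" where
  "braid_group n g = presented_group (bgens n g) (braid_rels n g)"

definition bclass :: "nat \<Rightarrow> nat \<Rightarrow> bgen \<Rightarrow> bgen word set" where
  "bclass n g x = pgen (braid_rels n g) x"

text \<open>The triple (p, m, k) (m, k supported on {1..g}) stands for the normal form
  sigma^p * prod_i a_i^(m i) * prod_i b_i^(k i).  Using b_j a_j b_j^-1 = sigma^-2 a_j,
  b_j a_l b_j^-1 = a_l (l ~= j), sigma central, the product is
  (p,m,k)(p',m',k') = (p + p' - 2 * sum_i k i * m' i, m + m', k + k').\<close>

definition sd_group :: "nat \<Rightarrow> (int \<times> (nat \<Rightarrow> int) \<times> (nat \<Rightarrow> int)) monoid" where
  "sd_group g =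
     \<lparr> carrier = {(p, m, k). \<forall>i. i \<notin> {1..g} \<longrightarrow> m i = 0 \<and> k i = 0},
       monoid.mult = (\<lambda>(p, m, k) (p', m', k').
                 (p + p' - 2 * (\<Sum>i\<in>{1..g}. k i * m' i), (\<lambda>i. m i + m' i), (\<lambda>i. k i + k' i))),
       one = (0, (\<lambda>_. 0), (\<lambda>_. 0)) \<rparr>"

definition sd_sigma :: "int \<times> (nat \<Rightarrow> int) \<times> (nat \<Rightarrow> int)" where
  "sd_sigma = (1, (\<lambda>_. 0), (\<lambda>_. 0))"

definition sd_a :: "nat \<Rightarrow> int \<times> (nat \<Rightarrow> int) \<times> (nat \<Rightarrow> int)" where
  "sd_a l = (0, (\<lambda>i. if i = l then 1 else 0), (\<lambda>_. 0))"

definition sd_b :: "nat \<Rightarrow> int \<times> (nat \<Rightarrow> int) \<times> (nat \<Rightarrow> int)" where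
  "sd_b l = (0, (\<lambda>_. 0), (\<lambda>i. if i = l then 1 else 0))"

end

theory Submission
  imports Defs
begin


lemma peq_class_eq: "word_class R u = word_class R v \<longleftrightarrow> peq R u v"
proof
  assume "word_class R u = word_class R v"
  then have "v \<in> word_class R u" by (simp add: word_class_def peq_refl)
  then show "peq R u v" by (simp add: word_class_def)
next
  assume h: "peq R u v"
  show "word_class R u = word_class R v"
    unfolding word_class_def using h peq_trans peq_sym by blast
qed

lemma pg_mult:
  "word_class R u \<otimes>\<^bsub>presented_group S R\<^esub> word_class R v = word_class R (u @ v)"
proof -
  have a: "(SOME x. x \<in> word_class R u) \<in> word_class R u"
    by (rule someI[of _ u]) (simp add: word_class_def peq_refl)
  have b: "(SOME x. x \<in> word_class R v) \<in> word_class R v"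
    by (rule someI[of _ v]) (simp add: word_class_def peq_refl)
  from a b have "peq R (u @ v) ((SOME x. x \<in> word_class R u) @ (SOME x. x \<in> word_class R v))"
    by (simp add: word_class_def peq_cong)
  then show ?thesis
    by (simp add: presented_group_def peq_class_eq peq_sym)
qed

definition invw :: "'g word \<Rightarrow> 'g word" where
  "invw w = rev (map (\<lambda>(x, e). (x, \<not> e)) w)"

lemma invw_simps [simp]: "invw [] = []" "invw ((x,e) # w) = invw w @ [(x, \<not> e)]"
  "invw (invw w) = w"
  by (auto simp: invw_def rev_map comp_def case_prod_beta)

lemma invw_set [simp]: "fst ` set (invw w) = fst ` set w"
proof -
  have "fst ` set (invw w) = fst ` (\<lambda>(x,e). (x, \<not> e)) ` set w"
    by (simp add: invw_def)
  also have "\<dots> = fst ` set w" by (force simp: image_iff)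
  finally show ?thesis .
qed

lemma peq_invw_r: "peq R (w @ invw w) []"
proof (induction w)
  case Nil then show ?case by (simp add: peq_refl)
next
  case (Cons xe w)
  obtain x e where xe: "xe = (x, e)" by force
  have "peq R ([(x,e)] @ ((w @ invw w) @ [(x, \<not> e)])) ([(x,e)] @ ([] @ [(x, \<not> e)]))"
    by (intro peq_cong peq_refl Cons)
  then have "peq R (xe # w @ invw (xe # w)) [(x,e),(x,\<not>e)]" by (simp add: xe)
  then show ?case using peq_cancel peq_trans by (fastforce simp: xe)
qed

lemma peq_invw_l: "peq R (invw w @ w) []"
  using peq_invw_r[of R "invw w"] by simp

lemma pg_carrier: "fst ` set w \<subseteq> S \<Longrightarrow> word_class R w \<in> carrier (presented_group S R)"
  by (auto simp: presented_group_def)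

lemma pg_carrierE: "P \<in> carrier (presented_group S R) \<Longrightarrow> (\<And>w. P = word_class R w \<Longrightarrow> fst ` set w \<subseteq> S \<Longrightarrow> thesis) \<Longrightarrow> thesis"
  by (auto simp: presented_group_def)

lemma pg_carrier_invw: "fst ` set w \<subseteq> S \<Longrightarrow> word_class R (invw w) \<in> carrier (presented_group S R)"
  by (rule pg_carrier) simp

lemma pg_one: "\<one>\<^bsub>presented_group S R\<^esub> = word_class R []"
  by (simp add: presented_group_def)

lemma pg_group: "group (presented_group S R)"
proof (rule groupI)
  fix x y assume "x \<in> carrier (presented_group S R)" "y \<in> carrier (presented_group S R)"
  then show "x \<otimes>\<^bsub>presented_group S R\<^esub> y \<in> carrier (presented_group S R)"
    by (auto elim!: pg_carrierE simp: pg_mult simp del: set_append intro!: pg_carrier) (auto simp: image_Un)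
next
  show "\<one>\<^bsub>presented_group S R\<^esub> \<in> carrier (presented_group S R)"
    by (auto simp: pg_one intro!: pg_carrier)
next
  fix x y z assume "x \<in> carrier (presented_group S R)" "y \<in> carrier (presented_group S R)"
    "z \<in> carrier (presented_group S R)"
  then show "x \<otimes>\<^bsub>presented_group S R\<^esub> y \<otimes>\<^bsub>presented_group S R\<^esub> z =
           x \<otimes>\<^bsub>presented_group S R\<^esub> (y \<otimes>\<^bsub>presented_group S R\<^esub> z)"
    by (auto elim!: pg_carrierE simp: pg_mult)
next
  fix x assume "x \<in> carrier (presented_group S R)"
  then show "\<one>\<^bsub>presented_group S R\<^esub> \<otimes>\<^bsub>presented_group S R\<^esub> x = x"
    by (auto elim!: pg_carrierE simp: pg_mult pg_one)
next
  fix x assume "x \<in> carrier (presented_group S R)"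
  then obtain w where w: "x = word_class R w" "fst ` set w \<subseteq> S" by (rule pg_carrierE)
  show "\<exists>y\<in>carrier (presented_group S R). y \<otimes>\<^bsub>presented_group S R\<^esub> x = \<one>\<^bsub>presented_group S R\<^esub>"
    by (rule bexI[of _ "word_class R (invw w)"])
      (use w in \<open>auto simp: pg_mult pg_one peq_class_eq peq_invw_l intro!: pg_carrier_invw\<close>)
qed

lemma pg_inv: "fst ` set w \<subseteq> S \<Longrightarrow> inv\<^bsub>presented_group S R\<^esub> (word_class R w) = word_class R (invw w)"
  by (rule group.inv_equality[OF pg_group])
    (auto simp: pg_mult pg_one peq_class_eq peq_invw_l peq_invw_r intro!: pg_carrier pg_carrier_invw)

lemma pg_rel: "(u, v) \<in> R \<Longrightarrow> word_class R u = word_class R v"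
  by (simp add: peq_class_eq peq_rel)


lemma sd_mult [simp]: "(p, m, k) \<otimes>\<^bsub>sd_group g\<^esub> (p', m', k') =
   (p + p' - 2 * (\<Sum>i\<in>{1..g}. k i * m' i), (\<lambda>i. m i + m' i), (\<lambda>i. k i + k' i))"
  by (simp add: sd_group_def)

lemma sd_one [simp]: "\<one>\<^bsub>sd_group g\<^esub> = (0, (\<lambda>_. 0), (\<lambda>_. 0))"
  by (simp add: sd_group_def)

lemma sd_carrier [simp]: "(p, m, k) \<in> carrier (sd_group g) \<longleftrightarrow> (\<forall>i. i \<notin> {1..g} \<longrightarrow> m i = 0 \<and> k i = 0)"
  by (simp add: sd_group_def)

lemma sd_group: "group (sd_group g)"
proof (rule groupI)
  fix x y assume "x \<in> carrier (sd_group g)" "y \<in> carrier (sd_group g)"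
  then show "x \<otimes>\<^bsub>sd_group g\<^esub> y \<in> carrier (sd_group g)"
    by (cases x; cases y) auto
next
  show "\<one>\<^bsub>sd_group g\<^esub> \<in> carrier (sd_group g)" by simp
next
  fix x y z
  show "x \<otimes>\<^bsub>sd_group g\<^esub> y \<otimes>\<^bsub>sd_group g\<^esub> z = x \<otimes>\<^bsub>sd_group g\<^esub> (y \<otimes>\<^bsub>sd_group g\<^esub> z)"
    by (cases x; cases y; cases z) (auto simp: algebra_simps sum.distrib)
next
  fix x show "\<one>\<^bsub>sd_group g\<^esub> \<otimes>\<^bsub>sd_group g\<^esub> x = x" by (cases x) simp
next
  fix x assume "x \<in> carrier (sd_group g)"
  then obtain p m k where x: "x = (p, m, k)" "\<forall>i. i \<notin> {1..g} \<longrightarrow> m i = 0 \<and> k i = 0"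
    by (cases x) auto
  show "\<exists>y\<in>carrier (sd_group g). y \<otimes>\<^bsub>sd_group g\<^esub> x = \<one>\<^bsub>sd_group g\<^esub>"
    by (rule bexI[of _ "(- p - 2 * (\<Sum>i\<in>{1..g}. k i * m i), (\<lambda>i. - m i), (\<lambda>i. - k i))"])
      (use x in \<open>auto simp: sum_negf\<close>)
qed

lemma sd_sigma_c [simp]: "sd_sigma \<in> carrier (sd_group g)" by (simp add: sd_sigma_def)
lemma sd_a_c [simp]: "l \<in> {1..g} \<Longrightarrow> sd_a l \<in> carrier (sd_group g)" by (auto simp: sd_a_def)
lemma sd_b_c [simp]: "l \<in> {1..g} \<Longrightarrow> sd_b l \<in> carrier (sd_group g)" by (auto simp: sd_b_def)

lemma sd_inv_sigma: "inv\<^bsub>sd_group g\<^esub> sd_sigma = (-1, (\<lambda>_. 0), (\<lambda>_. 0))"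
  by (rule group.inv_equality[OF sd_group]) (auto simp: sd_sigma_def)
lemma sd_inv_a: "l \<in> {1..g} \<Longrightarrow> inv\<^bsub>sd_group g\<^esub> sd_a l = (0, (\<lambda>i. if i = l then -1 else 0), (\<lambda>_. 0))"
  by (rule group.inv_equality[OF sd_group]) (auto simp: sd_a_def fun_eq_iff)
lemma sd_inv_b: "l \<in> {1..g} \<Longrightarrow> inv\<^bsub>sd_group g\<^esub> sd_b l = (0, (\<lambda>_. 0), (\<lambda>i. if i = l then -1 else 0))"
  by (rule group.inv_equality[OF sd_group]) (auto simp: sd_b_def fun_eq_iff)


lemmas sdM = group.is_monoid[OF sd_group]
lemmas sd_one_closed = monoid.one_closed[OF sdM]
lemmas sd_l_one = monoid.l_one[OF sdM]
lemmas sd_m_assoc = monoid.m_assoc[OF sdM]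
lemmas sd_m_closed = monoid.m_closed[OF sdM]

definition gv :: "nat \<Rightarrow> bgen \<Rightarrow> int \<times> (nat \<Rightarrow> int) \<times> (nat \<Rightarrow> int)" where
  "gv g x = (case x of Sig i \<Rightarrow> sd_sigma
     | A l \<Rightarrow> if l \<in> {1..g} then sd_a l else \<one>\<^bsub>sd_group g\<^esub>
     | B l \<Rightarrow> if l \<in> {1..g} then sd_b l else \<one>\<^bsub>sd_group g\<^esub>)"

definition gval :: "nat \<Rightarrow> bgen \<Rightarrow> bool \<Rightarrow> int \<times> (nat \<Rightarrow> int) \<times> (nat \<Rightarrow> int)" where
  "gval g x e = (if e then inv\<^bsub>sd_group g\<^esub> (gv g x) else gv g x)"

fun seval :: "nat \<Rightarrow> bgen word \<Rightarrow> int \<times> (nat \<Rightarrow> int) \<times> (nat \<Rightarrow> int)" where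
  "seval g [] = \<one>\<^bsub>sd_group g\<^esub>"
| "seval g ((x, e) # w) = gval g x e \<otimes>\<^bsub>sd_group g\<^esub> seval g w"

lemma gv_c [simp]: "gv g x \<in> carrier (sd_group g)"
  by (auto simp: gv_def split: bgen.split simp del: sd_one intro: sd_one_closed)

lemma gval_c [simp]: "gval g x e \<in> carrier (sd_group g)"
  by (simp add: gval_def group.inv_closed[OF sd_group])

lemma eval_c [simp]: "seval g w \<in> carrier (sd_group g)"
  by (induction w) (auto simp del: sd_one sd_mult intro!: sd_one_closed sd_m_closed)

lemma eval_append: "seval g (u @ w) = seval g u \<otimes>\<^bsub>sd_group g\<^esub> seval g w"
  by (induction u) (auto simp del: sd_one sd_mult simp: sd_l_one sd_m_assoc)

lemma gval_Sig [simp]: "gval g (Sig i) False = (1, (\<lambda>_. 0), (\<lambda>_. 0))"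
  "gval g (Sig i) True = (-1, (\<lambda>_. 0), (\<lambda>_. 0))"
  by (simp_all add: gval_def gv_def sd_inv_sigma) (simp add: sd_sigma_def)

lemma gval_A [simp]: "l \<in> {1..g} \<Longrightarrow> gval g (A l) False = (0, (\<lambda>i. if i = l then 1 else 0), (\<lambda>_. 0))"
  "l \<in> {1..g} \<Longrightarrow> gval g (A l) True = (0, (\<lambda>i. if i = l then -1 else 0), (\<lambda>_. 0))"
  by (simp_all add: gval_def gv_def sd_inv_a del: atLeastAtMost_iff) (simp add: sd_a_def)

lemma gval_B [simp]: "l \<in> {1..g} \<Longrightarrow> gval g (B l) False = (0, (\<lambda>_. 0), (\<lambda>i. if i = l then 1 else 0))"
  "l \<in> {1..g} \<Longrightarrow> gval g (B l) True = (0, (\<lambda>_. 0), (\<lambda>i. if i = l then -1 else 0))"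
  by (simp_all add: gval_def gv_def sd_inv_b del: atLeastAtMost_iff) (simp add: sd_b_def)

lemma sum_ind: "finite II \<Longrightarrow> (\<Sum>i\<in>II. (if i = l then (c::int) else 0) * (if i = j then d else 0)) =
   (if l = j \<and> l \<in> II then c * d else 0)"
proof -
  have "(\<Sum>i\<in>II. (if i = l then (c::int) else 0) * (if i = j then d else 0)) =
        (\<Sum>i\<in>II. (if i = l then (if l = j then c * d else 0) else 0))"
    by (rule sum.cong) auto
  moreover assume "finite II"
  ultimately show ?thesis by (simp add: sum.delta')
qed

lemma eval_rel: "(u, v) \<in> braid_rels n g \<Longrightarrow> seval g u = seval g v"
  unfolding braid_rels_def
  apply (elim UnE)
  apply (auto simp: sum_ind fun_eq_iff)
  done


lemmas sd_inv_closed = group.inv_closed[OF sd_group]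
lemmas sd_l_inv = group.l_inv[OF sd_group]
lemmas sd_r_inv = group.r_inv[OF sd_group]

lemma seval_peq: "peq (braid_rels n g) u v \<Longrightarrow> seval g u = seval g v"
proof (induction rule: peq.induct)
  case (peq_cancel x e)
  show ?case
    by (cases e) (simp_all del: sd_one sd_mult add: gval_def sd_l_inv sd_r_inv
         sd_m_assoc[symmetric] sd_inv_closed monoid.r_one[OF sdM])
next
  case (peq_rel u w) then show ?case by (rule eval_rel)
next
  case (peq_cong u u' w w') then show ?case by (simp add: eval_append)
qed auto

definition hmap :: "nat \<Rightarrow> nat \<Rightarrow> bgen word set \<Rightarrow> int \<times> (nat \<Rightarrow> int) \<times> (nat \<Rightarrow> int)" where
  "hmap n g P = seval g (SOME w. w \<in> P)"

lemma hmap_class: "hmap n g (word_class (braid_rels n g) w) = seval g w"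
proof -
  have "(SOME x. x \<in> word_class (braid_rels n g) w) \<in> word_class (braid_rels n g) w"
    by (rule someI[of _ w]) (simp add: word_class_def peq_refl)
  then show ?thesis unfolding hmap_def word_class_def
    by (auto intro!: seval_peq[symmetric])
qed

lemma braid_group_group: "group (braid_group n g)"
  by (simp add: braid_group_def pg_group)

lemma hmap_hom: "hmap n g \<in> hom (braid_group n g) (sd_group g)"
proof (rule homI)
  fix x assume "x \<in> carrier (braid_group n g)"
  then show "hmap n g x \<in> carrier (sd_group g)"
    by (auto simp: braid_group_def hmap_class simp del: sd_carrier elim!: pg_carrierE)
next
  fix x y assume "x \<in> carrier (braid_group n g)" "y \<in> carrier (braid_group n g)"
  then show "hmap n g (x \<otimes>\<^bsub>braid_group n g\<^esub> y) = hmap n g x \<otimes>\<^bsub>sd_group g\<^esub> hmap n g y"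
    by (auto simp: braid_group_def hmap_class pg_mult eval_append simp del: sd_mult elim!: pg_carrierE)
qed

lemma hmap_group_hom: "group_hom (braid_group n g) (sd_group g) (hmap n g)"
  by (simp add: group_hom_def group_hom_axioms_def braid_group_group sd_group hmap_hom)

lemma sd_gen_all:
  assumes I: "subgroup I (sd_group g)" and s: "sd_sigma \<in> I"
    and ab: "\<And>j. j \<in> {1..g} \<Longrightarrow> sd_a j \<in> I \<and> sd_b j \<in> I"
  shows "carrier (sd_group g) \<subseteq> I"
proof -
  interpret I: subgroup I "sd_group g" by (rule I)
  have P: "(p, (\<lambda>_. 0), (\<lambda>_. 0)) \<in> I" for p :: int
  proof (induction p rule: int_induct[where k=0])
    case base
    then show ?case using I.one_closed by simp
  next
    case (step1 i)
    have "(i + 1, (\<lambda>_. 0), (\<lambda>_. 0)) = (i, (\<lambda>_. 0), (\<lambda>_. 0)) \<otimes>\<^bsub>sd_group g\<^esub> sd_sigma"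
      by (simp add: sd_sigma_def)
    then show ?case using I.m_closed[OF step1(2) s] by simp
  next
    case (step2 i)
    have "(i - 1, (\<lambda>_. 0), (\<lambda>_. 0)) = (i, (\<lambda>_. 0), (\<lambda>_. 0)) \<otimes>\<^bsub>sd_group g\<^esub> inv\<^bsub>sd_group g\<^esub> sd_sigma"
      by (simp add: sd_inv_sigma)
    then show ?case using I.m_closed[OF step2(2) I.m_inv_closed[OF s]] by simp
  qed
  have Aj: "(0, (\<lambda>i. if i = j then t else 0), (\<lambda>_. 0)) \<in> I" if j: "j \<in> {1..g}" for j and t :: int
  proof (induction t rule: int_induct[where k=0])
    case base
    then show ?case using I.one_closed by (simp add: fun_eq_iff)
  next
    case (step1 i)
    have "(0, (\<lambda>l. if l = j then i + 1 else 0), (\<lambda>_. 0)) = (0, (\<lambda>l. if l = j then i else 0), (\<lambda>_. 0)) \<otimes>\<^bsub>sd_group g\<^esub> sd_a j"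
      by (simp add: sd_a_def fun_eq_iff)
    then show ?case using I.m_closed[OF step1(2)] ab[OF j] by simp
  next
    case (step2 i)
    have "(0, (\<lambda>l. if l = j then i - 1 else 0), (\<lambda>_. 0)) = (0, (\<lambda>l. if l = j then i else 0), (\<lambda>_. 0)) \<otimes>\<^bsub>sd_group g\<^esub> inv\<^bsub>sd_group g\<^esub> sd_a j"
      using j by (simp add: sd_inv_a fun_eq_iff del: atLeastAtMost_iff)
    then show ?case using I.m_closed[OF step2(2) I.m_inv_closed] ab[OF j] by simp
  qed
  have Bj: "(0, (\<lambda>_. 0), (\<lambda>i. if i = j then t else 0)) \<in> I" if j: "j \<in> {1..g}" for j and t :: int
  proof (induction t rule: int_induct[where k=0])
    case base
    then show ?case using I.one_closed by (simp add: fun_eq_iff)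
  next
    case (step1 i)
    have "(0, (\<lambda>_. 0), (\<lambda>l. if l = j then i + 1 else 0)) = (0, (\<lambda>_. 0), (\<lambda>l. if l = j then i else 0)) \<otimes>\<^bsub>sd_group g\<^esub> sd_b j"
      by (simp add: sd_b_def fun_eq_iff)
    then show ?case using I.m_closed[OF step1(2)] ab[OF j] by simp
  next
    case (step2 i)
    have "(0, (\<lambda>_. 0), (\<lambda>l. if l = j then i - 1 else 0)) = (0, (\<lambda>_. 0), (\<lambda>l. if l = j then i else 0)) \<otimes>\<^bsub>sd_group g\<^esub> inv\<^bsub>sd_group g\<^esub> sd_b j"
      using j by (simp add: sd_inv_b fun_eq_iff del: atLeastAtMost_iff)
    then show ?case using I.m_closed[OF step2(2) I.m_inv_closed] ab[OF j] by simp
  qed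
  have M: "(0, (\<lambda>i. if i \<le> r then m i else 0), (\<lambda>_. 0)) \<in> I"
    if m: "\<forall>i. i \<notin> {1..g} \<longrightarrow> m i = 0" for m r
  proof (induction r)
    case 0
    have "(\<lambda>i::nat. if i \<le> 0 then m i else 0) = (\<lambda>_. 0)" using m by auto
    then show ?case using I.one_closed by simp
  next
    case (Suc r)
    have e: "(0, (\<lambda>i. if i \<le> Suc r then m i else 0), (\<lambda>_. 0)) =
      (0, (\<lambda>i. if i \<le> r then m i else 0), (\<lambda>_. 0)) \<otimes>\<^bsub>sd_group g\<^esub> (0, (\<lambda>i. if i = Suc r then m (Suc r) else 0), (\<lambda>_. 0))"
      by (auto simp: fun_eq_iff)
    show ?case
    proof (cases "Suc r \<in> {1..g}")
      case True
      then show ?thesis unfolding e by (intro I.m_closed Suc Aj)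
    next
      case False
      then have "(\<lambda>i. if i = Suc r then m (Suc r) else 0) = (\<lambda>_. 0)" using m by auto
      then show ?thesis unfolding e using I.m_closed[OF Suc I.one_closed] by simp
    qed
  qed
  have K: "(0, (\<lambda>_. 0), (\<lambda>i. if i \<le> r then m i else 0)) \<in> I"
    if m: "\<forall>i. i \<notin> {1..g} \<longrightarrow> m i = 0" for m r
  proof (induction r)
    case 0
    have "(\<lambda>i::nat. if i \<le> 0 then m i else 0) = (\<lambda>_. 0)" using m by auto
    then show ?case using I.one_closed by simp
  next
    case (Suc r)
    have e: "(0, (\<lambda>_. 0), (\<lambda>i. if i \<le> Suc r then m i else 0)) =
      (0, (\<lambda>_. 0), (\<lambda>i. if i \<le> r then m i else 0)) \<otimes>\<^bsub>sd_group g\<^esub> (0, (\<lambda>_. 0), (\<lambda>i. if i = Suc r then m (Suc r) else 0))"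
      by (auto simp: fun_eq_iff)
    show ?case
    proof (cases "Suc r \<in> {1..g}")
      case True
      then show ?thesis unfolding e by (intro I.m_closed Suc Bj)
    next
      case False
      then have "(\<lambda>i. if i = Suc r then m (Suc r) else 0) = (\<lambda>_. 0)" using m by auto
      then show ?thesis unfolding e using I.m_closed[OF Suc I.one_closed] by simp
    qed
  qed
  show ?thesis
  proof
    fix x assume "x \<in> carrier (sd_group g)"
    then obtain p m k where x: "x = (p, m, k)" and mk: "\<forall>i. i \<notin> {1..g} \<longrightarrow> m i = 0 \<and> k i = 0"
      by (cases x) auto
    have m: "(\<lambda>i. if i \<le> g then m i else 0) = m" "(\<lambda>i. if i \<le> g then k i else 0) = k"
      using mk by (auto simp: fun_eq_iff)
    have "x = (p, (\<lambda>_. 0), (\<lambda>_. 0)) \<otimes>\<^bsub>sd_group g\<^esub> (0, (\<lambda>i. if i \<le> g then m i else 0), (\<lambda>_. 0))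
        \<otimes>\<^bsub>sd_group g\<^esub> (0, (\<lambda>_. 0), (\<lambda>i. if i \<le> g then k i else 0))"
      by (simp add: m x)
    also have "\<dots> \<in> I" by (intro I.m_closed P M K) (use mk in auto)
    finally show "x \<in> I" .
  qed
qed


lemma (in group) conj_comm:
  assumes "g \<in> carrier G" "x \<in> carrier G" "y \<in> carrier G"
  shows "g \<otimes> (x \<otimes> y \<otimes> inv x \<otimes> inv y) \<otimes> inv g =
    (g \<otimes> x \<otimes> inv g) \<otimes> (g \<otimes> y \<otimes> inv g) \<otimes> inv (g \<otimes> x \<otimes> inv g) \<otimes> inv (g \<otimes> y \<otimes> inv g)"
proof -
  have c: "\<And>z. z \<in> carrier G \<Longrightarrow> inv g \<otimes> (g \<otimes> z) = z"
    using assms(1) by (simp add: m_assoc[symmetric])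
  show ?thesis using assms by (simp add: m_assoc inv_mult_group c)
qed

lemma (in group) lcs_normal: "lcs G k \<lhd> G"
proof (induction k)
  case 0 then show ?case by (simp add: normal_self)
next
  case (Suc k)
  interpret N: normal "lcs G k" G by (rule Suc)
  have sub: "lcs G k \<subseteq> carrier G" by (rule N.subset)
  show ?case
    unfolding lcs.simps
  proof (rule normal_generateI)
    show "{x \<otimes> y \<otimes> inv x \<otimes> inv y |x y. x \<in> carrier G \<and> y \<in> lcs G k} \<subseteq> carrier G"
      using sub by auto
  next
    fix h g assume h: "h \<in> {x \<otimes> y \<otimes> inv x \<otimes> inv y |x y. x \<in> carrier G \<and> y \<in> lcs G k}"
      and g: "g \<in> carrier G"
    then obtain x y where xy: "h = x \<otimes> y \<otimes> inv x \<otimes> inv y" "x \<in> carrier G" "y \<in> lcs G k" by blast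
    have yc: "y \<in> carrier G" using xy sub by auto
    have "g \<otimes> y \<otimes> inv g \<in> lcs G k" using Suc g xy(3) normal_inv_iff by blast
    then show "g \<otimes> h \<otimes> inv g \<in> {x \<otimes> y \<otimes> inv x \<otimes> inv y |x y. x \<in> carrier G \<and> y \<in> lcs G k}"
      using conj_comm[OF g xy(2) yc] xy(1) g xy(2) by blast
  qed
qed

lemma sd_inv: "(p, m, k) \<in> carrier (sd_group g) \<Longrightarrow>
  inv\<^bsub>sd_group g\<^esub> (p, m, k) = (- p - 2 * (\<Sum>i\<in>{1..g}. k i * m i), (\<lambda>i. - m i), (\<lambda>i. - k i))"
  by (rule group.inv_equality[OF sd_group]) (auto simp: sum_negf)

definition Zs :: "(int \<times> (nat \<Rightarrow> int) \<times> (nat \<Rightarrow> int)) set" where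
  "Zs = {(p, (\<lambda>_. 0), (\<lambda>_. 0)) | p. True}"

lemma sd_comm_Zs:
  assumes "x \<in> carrier (sd_group g)" "y \<in> carrier (sd_group g)"
  shows "x \<otimes>\<^bsub>sd_group g\<^esub> y \<otimes>\<^bsub>sd_group g\<^esub> inv\<^bsub>sd_group g\<^esub> x \<otimes>\<^bsub>sd_group g\<^esub> inv\<^bsub>sd_group g\<^esub> y \<in> Zs"
  using assms by (cases x; cases y) (auto simp: sd_inv Zs_def simp del: sd_carrier)

lemma sd_Zs_central: "z \<in> Zs \<Longrightarrow> x \<otimes>\<^bsub>sd_group g\<^esub> z = z \<otimes>\<^bsub>sd_group g\<^esub> x"
  by (cases x) (auto simp: Zs_def)

lemma sd_Zs_c: "z \<in> Zs \<Longrightarrow> z \<in> carrier (sd_group g)"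
  by (auto simp: Zs_def)

lemma sd_comm_Zs_one:
  assumes "x \<in> carrier (sd_group g)" "z \<in> Zs"
  shows "x \<otimes>\<^bsub>sd_group g\<^esub> z \<otimes>\<^bsub>sd_group g\<^esub> inv\<^bsub>sd_group g\<^esub> x \<otimes>\<^bsub>sd_group g\<^esub> inv\<^bsub>sd_group g\<^esub> z = \<one>\<^bsub>sd_group g\<^esub>"
proof -
  interpret S: group "sd_group g" by (rule sd_group)
  have zc: "z \<in> carrier (sd_group g)" using assms(2) by (rule sd_Zs_c)
  have "x \<otimes>\<^bsub>sd_group g\<^esub> z = z \<otimes>\<^bsub>sd_group g\<^esub> x" by (rule sd_Zs_central[OF assms(2)])
  then show ?thesis using assms(1) zc by (simp add: S.m_assoc del: sd_one sd_mult)
qed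

lemma (in group) gamma3_kernel:
  assumes hh: "h \<in> hom G (sd_group g)"
  shows "lcs G 2 \<subseteq> kernel G (sd_group g) h"
proof -
  have gc: "\<And>x. x \<in> generate G {x \<otimes> y \<otimes> inv x \<otimes> inv y |x y. x \<in> carrier G \<and> y \<in> carrier G} \<Longrightarrow> x \<in> carrier G"
    by (rule generate_in_carrier) auto
  have sub1: "lcs G 1 \<subseteq> carrier G" by (rule subgroup.subset[OF normal_imp_subgroup[OF lcs_normal]])
  have gsi: "\<And>K H. K \<subseteq> H \<Longrightarrow> subgroup H G \<Longrightarrow> generate G K \<subseteq> H"
    by (rule generate_subgroup_incl)
  interpret group_hom G "sd_group g" h
    by (simp add: group_hom_def group_hom_axioms_def hh sd_group is_group)
  have H: "sd_group g = sd_group g" ..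
  interpret S: group "sd_group g" by (rule sd_group)
  have L1: "h x \<in> Zs" if "x \<in> lcs G 1" for x
    using that unfolding One_nat_def lcs.simps
  proof (induction rule: generate.induct)
    case one then show ?case using H by (simp add: Zs_def)
  next
    case (incl c)
    then obtain x y where "c = x \<otimes> y \<otimes> inv x \<otimes> inv y" "x \<in> carrier G" "y \<in> carrier G" by auto
    then show ?case using sd_comm_Zs[of "h x" g "h y"] H by simp
  next
    case (inv c)
    then obtain x y where "c = x \<otimes> y \<otimes> inv x \<otimes> inv y" "x \<in> carrier G" "y \<in> carrier G" by auto
    then have cc: "c \<in> carrier G" and "h c \<in> Zs" using sd_comm_Zs[of "h x" g "h y"] H by auto
    then obtain p where "h c = (p, (\<lambda>_. 0), (\<lambda>_. 0))" by (auto simp: Zs_def)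
    then show ?case using cc H by (simp add: sd_inv Zs_def)
  next
    case (eng a b)
    obtain p q where "h a = (p, (\<lambda>_. 0), (\<lambda>_. 0))" "h b = (q, (\<lambda>_. 0), (\<lambda>_. 0))"
      using eng(3,4) unfolding Zs_def by blast
    moreover have "a \<in> carrier G" "b \<in> carrier G"
      using gc[OF eng(1)] gc[OF eng(2)] .
    ultimately show ?case using H by (simp add: Zs_def)
  qed
  have l2: "lcs G 2 = generate G {x \<otimes> y \<otimes> inv x \<otimes> inv y |x y. x \<in> carrier G \<and> y \<in> lcs G (Suc 0)}"
    by (simp only: numeral_2_eq_2 lcs.simps(2)[of G "Suc 0"])
  show ?thesis
    unfolding l2
  proof (rule gsi)
    show "subgroup (kernel G (sd_group g) h) G" by (rule subgroup_kernel)
  next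
    show "{x \<otimes> y \<otimes> inv x \<otimes> inv y |x y. x \<in> carrier G \<and> y \<in> lcs G (Suc 0)} \<subseteq> kernel G (sd_group g) h"
    proof
      fix c assume "c \<in> {x \<otimes> y \<otimes> inv x \<otimes> inv y |x y. x \<in> carrier G \<and> y \<in> lcs G (Suc 0)}"
      then obtain x y where c: "c = x \<otimes> y \<otimes> inv x \<otimes> inv y" "x \<in> carrier G" "y \<in> lcs G 1" by auto
      have yc: "y \<in> carrier G" using c sub1 by auto
      have "h c = \<one>\<^bsub>sd_group g\<^esub>"
        using c yc sd_comm_Zs_one[of "h x" g "h y"] L1[OF c(3)] H by simp
      then show "c \<in> kernel G (sd_group g) h" using c yc H by (simp add: kernel_def del: sd_one)
    qed
  qed
qed


context group begin

lemma twist_nat: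
  assumes x: "x \<in> carrier G" and y: "y \<in> carrier G" and z: "z \<in> carrier G"
    and xz: "x \<otimes> z = z \<otimes> x" and xy: "x \<otimes> y = z \<otimes> y \<otimes> x"
  shows "x [^] (n::nat) \<otimes> y = z [^] n \<otimes> y \<otimes> x [^] n"
proof (induction n)
  case 0 then show ?case using y by simp
next
  case (Suc n)
  have xzn: "x \<otimes> z [^] n = z [^] n \<otimes> x" using group_commutes_pow[OF xz[symmetric] z x] by simp
  have "x [^] Suc n \<otimes> y = x \<otimes> (x [^] n \<otimes> y)" using x y by (simp only: nat_pow_Suc2[OF x]) (simp add: m_assoc)
  also have "\<dots> = x \<otimes> (z [^] n \<otimes> y \<otimes> x [^] n)" by (simp add: Suc)
  also have "\<dots> = (x \<otimes> z [^] n) \<otimes> y \<otimes> x [^] n" using x y z by (simp add: m_assoc)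
  also have "\<dots> = z [^] n \<otimes> (x \<otimes> y) \<otimes> x [^] n" using x y z by (simp add: xzn m_assoc)
  also have "\<dots> = z [^] n \<otimes> (z \<otimes> y \<otimes> x) \<otimes> x [^] n" by (simp add: xy)
  also have "\<dots> = (z [^] n \<otimes> z) \<otimes> y \<otimes> (x \<otimes> x [^] n)" using x y z by (simp add: m_assoc)
  also have "\<dots> = z [^] Suc n \<otimes> y \<otimes> x [^] Suc n" using x z by (simp only: nat_pow_Suc2[OF x, symmetric] nat_pow_Suc[symmetric])
  finally show ?case .
qed

lemma twist_int:
  assumes x: "x \<in> carrier G" and y: "y \<in> carrier G" and z: "z \<in> carrier G"
    and xz: "x \<otimes> z = z \<otimes> x" and yz: "y \<otimes> z = z \<otimes> y" and xy: "x \<otimes> y = z \<otimes> y \<otimes> x"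
  shows "x [^] (n::int) \<otimes> y = z [^] n \<otimes> y \<otimes> x [^] n"
proof (cases "n \<ge> 0")
  case True
  define k where "k = nat n"
  have "n = int k" using True by (simp add: k_def)
  then show ?thesis using twist_nat[OF x y z xz xy, of k] by (simp add: int_pow_int)
next
  case False
  define k where "k = nat (- n)"
  have n: "n = - int k" using False by (simp add: k_def)
  have ix: "inv x \<in> carrier G" and iz: "inv z \<in> carrier G" using x z by auto
  have ixz: "inv x \<otimes> inv z = inv z \<otimes> inv x" using x z xz by (simp add: inv_mult_group[symmetric])
  have "inv x \<otimes> (x \<otimes> y) \<otimes> inv x = inv x \<otimes> (z \<otimes> y \<otimes> x) \<otimes> inv x" by (simp add: xy)
  then have "x \<otimes> (y \<otimes> inv x) = z \<otimes> y" using x y z by (simp add: m_assoc)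
  then have "y \<otimes> inv x = inv x \<otimes> z \<otimes> y" using x y z by (simp add: m_assoc inv_solve_left)
  then have "inv z \<otimes> (y \<otimes> inv x) = inv z \<otimes> (inv x \<otimes> z \<otimes> y)" by simp
  also have "\<dots> = inv z \<otimes> (z \<otimes> inv x) \<otimes> y"
  proof -
    have "x \<otimes> (z \<otimes> inv x) = (x \<otimes> z) \<otimes> inv x" using x z by (simp add: m_assoc)
    also have "\<dots> = z \<otimes> (x \<otimes> inv x)" using x z by (simp add: xz m_assoc)
    finally have "z = x \<otimes> (z \<otimes> inv x)" using x z by simp
    moreover have "z \<otimes> inv x = inv x \<otimes> z \<longleftrightarrow> z = x \<otimes> (z \<otimes> inv x)"
      by (rule inv_solve_left) (use x z in auto)
    ultimately have "inv x \<otimes> z = z \<otimes> inv x" by simp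
    then show ?thesis using x y z by (simp add: m_assoc)
  qed
  also have "\<dots> = inv x \<otimes> y" using x y z by (simp add: m_assoc[symmetric])
  finally have ixy: "inv x \<otimes> y = inv z \<otimes> y \<otimes> inv x" using x y z by (simp add: m_assoc)
  show ?thesis using twist_nat[OF ix y iz ixz ixy, of k] n x z
    by (simp add: int_pow_neg int_pow_int nat_pow_inv)
qed

lemma comm_int:
  assumes x: "x \<in> carrier G" and y: "y \<in> carrier G" and xy: "x \<otimes> y = y \<otimes> x"
  shows "x [^] (n::int) \<otimes> y = y \<otimes> x [^] n"
  using twist_int[OF x y one_closed _ _, of n] x y xy by simp

lemma comm_int2:
  assumes x: "x \<in> carrier G" and y: "y \<in> carrier G" and xy: "x \<otimes> y = y \<otimes> x"
  shows "x [^] (n::int) \<otimes> y [^] (m::int) = y [^] m \<otimes> x [^] n"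
  using comm_int[OF y int_pow_closed[OF x] comm_int[OF x y xy, symmetric], of m] by simp

end


context group begin

definition Pf :: "(nat \<Rightarrow> 'a) \<Rightarrow> nat list \<Rightarrow> (nat \<Rightarrow> int) \<Rightarrow> 'a" where
  "Pf f L m = foldr (\<lambda>i r. f i [^] m i \<otimes> r) L \<one>"

lemma Pf_simps [simp]: "Pf f [] m = \<one>" "Pf f (i # L) m = f i [^] m i \<otimes> Pf f L m"
  by (simp_all add: Pf_def)

lemma Pf_c: "(\<And>i. i \<in> set L \<Longrightarrow> f i \<in> carrier G) \<Longrightarrow> Pf f L m \<in> carrier G"
  by (induction L) auto

lemma Pf_comm:
  assumes c: "c \<in> carrier G" and f: "\<And>i. i \<in> set L \<Longrightarrow> f i \<in> carrier G"
    and cf: "\<And>i. i \<in> set L \<Longrightarrow> c \<otimes> f i = f i \<otimes> c"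
  shows "c \<otimes> Pf f L m = Pf f L m \<otimes> c"
  using f cf
proof (induction L)
  case Nil then show ?case using c by simp
next
  case (Cons i L)
  have fi: "f i \<in> carrier G" using Cons by simp
  have fL: "Pf f L m \<in> carrier G" using Cons by (intro Pf_c) auto
  have ih: "c \<otimes> Pf f L m = Pf f L m \<otimes> c" using Cons by auto
  have ci: "c \<otimes> f i [^] m i = f i [^] m i \<otimes> c"
    using comm_int[OF fi c, of "m i"] Cons(3)[of i] by simp
  have "c \<otimes> (f i [^] m i \<otimes> Pf f L m) = (c \<otimes> f i [^] m i) \<otimes> Pf f L m"
    using c fi fL by (simp add: m_assoc)
  also have "\<dots> = f i [^] m i \<otimes> (c \<otimes> Pf f L m)" using c fi fL by (simp add: ci m_assoc)
  also have "\<dots> = (f i [^] m i \<otimes> Pf f L m) \<otimes> c" using c fi fL by (simp add: ih m_assoc)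
  finally show ?case by simp
qed

lemma Pf_notin: "j \<notin> set L \<Longrightarrow> Pf f L (m(j := t)) = Pf f L m"
  by (induction L) auto

lemma Pf_mult:
  assumes f: "\<And>i. i \<in> set L \<Longrightarrow> f i \<in> carrier G"
    and ff: "\<And>i. i \<in> set L \<Longrightarrow> f i \<otimes> f j = f j \<otimes> f i"
    and d: "distinct L" and j: "j \<in> set L"
  shows "Pf f L m \<otimes> f j [^] (t::int) = Pf f L (m(j := m j + t))"
  using f ff d j
proof (induction L)
  case Nil then show ?case by simp
next
  case (Cons i L)
  have fi: "f i \<in> carrier G" using Cons by simp
  have fj: "f j \<in> carrier G" using Cons by auto
  have fL: "Pf f L m \<in> carrier G" using Cons by (intro Pf_c) auto
  show ?case
  proof (cases "i = j")
    case True
    then have jL: "j \<notin> set L" using Cons by auto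
    have "f j [^] t \<otimes> Pf f L m = Pf f L m \<otimes> f j [^] t"
    proof (rule Pf_comm)
      show "f j [^] t \<in> carrier G" using fj by simp
      fix l assume l: "l \<in> set L"
      then have "f l \<in> carrier G" "f l \<otimes> f j = f j \<otimes> f l" using Cons by auto
      then show "f j [^] t \<otimes> f l = f l \<otimes> f j [^] t" using comm_int[OF fj, of "f l" t] by simp
    qed (use Cons in auto)
    then have "f i [^] m i \<otimes> Pf f L m \<otimes> f j [^] t = f j [^] m j \<otimes> f j [^] t \<otimes> Pf f L m"
      using True fj fL by (simp add: m_assoc)
    also have "\<dots> = f j [^] (m j + t) \<otimes> Pf f L m" using fj by (simp add: int_pow_mult)
    finally have A: "Pf f (i # L) m \<otimes> f j [^] t = f j [^] (m j + t) \<otimes> Pf f L m"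
      by (simp only: Pf_simps)
    have "Pf f (i # L) (m(j := m j + t)) = f j [^] (m j + t) \<otimes> Pf f L m"
      by (simp only: Pf_simps True fun_upd_same Pf_notin[OF jL])
    then show ?thesis by (simp only: A)
  next
    case False
    have ih: "Pf f L m \<otimes> f j [^] t = Pf f L (m(j := m j + t))"
      by (rule Cons.IH) (use Cons False in auto)
    show ?thesis using False fi fL fj by (simp add: m_assoc ih fun_upd_def)
  qed
qed

lemma Pf_twist:
  assumes f: "\<And>i. i \<in> set L \<Longrightarrow> f i \<in> carrier G"
    and y: "y \<in> carrier G" and z: "z \<in> carrier G"
    and zf: "\<And>i. i \<in> set L \<Longrightarrow> f i \<otimes> z = z \<otimes> f i" and yz: "y \<otimes> z = z \<otimes> y"
    and fy: "\<And>i. i \<in> set L \<Longrightarrow> f i \<otimes> y = (if i = j then z else \<one>) \<otimes> y \<otimes> f i"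
    and d: "distinct L"
  shows "Pf f L m \<otimes> y = z [^] (if j \<in> set L then m j else 0) \<otimes> y \<otimes> Pf f L m"
  using f zf fy d
proof (induction L)
  case Nil then show ?case using y by simp
next
  case (Cons i L)
  have fi: "f i \<in> carrier G" using Cons by simp
  have fL: "Pf f L m \<in> carrier G" using Cons by (intro Pf_c) auto
  define e' where "e' = (if j \<in> set L then m j else 0)"
  define w where "w = (if i = j then z else \<one>)"
  have wc: "w \<in> carrier G" using z by (simp add: w_def)
  have ih: "Pf f L m \<otimes> y = z [^] e' \<otimes> y \<otimes> Pf f L m" using Cons by (auto simp: e'_def)
  have tw: "f i [^] m i \<otimes> y = w [^] m i \<otimes> y \<otimes> f i [^] m i"
    by (rule twist_int[OF fi y wc]) (use Cons zf yz z y in \<open>auto simp: w_def\<close>)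
  have zc: "z [^] e' \<otimes> f i [^] m i = f i [^] m i \<otimes> z [^] e'"
    using comm_int2[OF z fi, of e' "m i"] Cons(3)[of i] by simp
  have "f i [^] m i \<otimes> Pf f L m \<otimes> y = f i [^] m i \<otimes> (z [^] e' \<otimes> y \<otimes> Pf f L m)"
    using fi fL y by (simp add: m_assoc ih)
  also have "\<dots> = (f i [^] m i \<otimes> z [^] e') \<otimes> y \<otimes> Pf f L m"
    using fi fL y z by (simp add: m_assoc)
  also have "\<dots> = z [^] e' \<otimes> (f i [^] m i \<otimes> y) \<otimes> Pf f L m"
    using fi fL y z by (simp add: m_assoc[symmetric] zc)
  also have "\<dots> = (z [^] e' \<otimes> w [^] m i) \<otimes> y \<otimes> (f i [^] m i \<otimes> Pf f L m)"
    using fi fL y z wc by (simp add: m_assoc tw)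
  also have "z [^] e' \<otimes> w [^] m i = z [^] (if j \<in> set (i # L) then m j else 0)"
  proof (cases "i = j")
    case True
    then have "j \<notin> set L" using Cons by auto
    then show ?thesis using True z by (simp add: e'_def w_def)
  next
    case False
    then show ?thesis using z by (simp add: e'_def w_def)
  qed
  finally show ?case by simp
qed

end


locale nf = group Q for Q (structure) +
  fixes s :: 'a and a b :: "nat \<Rightarrow> 'a" and g :: nat
  assumes s_c: "s \<in> carrier Q"
    and a_c: "i \<in> {1..g} \<Longrightarrow> a i \<in> carrier Q"
    and b_c: "i \<in> {1..g} \<Longrightarrow> b i \<in> carrier Q"
    and s_a: "i \<in> {1..g} \<Longrightarrow> s \<otimes> a i = a i \<otimes> s"
    and s_b: "i \<in> {1..g} \<Longrightarrow> s \<otimes> b i = b i \<otimes> s"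
    and a_a: "i \<in> {1..g} \<Longrightarrow> j \<in> {1..g} \<Longrightarrow> a i \<otimes> a j = a j \<otimes> a i"
    and b_b: "i \<in> {1..g} \<Longrightarrow> j \<in> {1..g} \<Longrightarrow> b i \<otimes> b j = b j \<otimes> b i"
    and a_b: "i \<in> {1..g} \<Longrightarrow> j \<in> {1..g} \<Longrightarrow> i \<noteq> j \<Longrightarrow> a i \<otimes> b j = b j \<otimes> a i"
    and ab: "i \<in> {1..g} \<Longrightarrow> a i \<otimes> b i = s [^] (2::int) \<otimes> b i \<otimes> a i"
begin

definition LL :: "nat list" where "LL = [1..<Suc g]"

lemma LL_set [simp]: "set LL = {1..g}" by (auto simp: LL_def)
lemma LL_dist [simp]: "distinct LL" by (simp add: LL_def)

definition psi :: "int \<times> (nat \<Rightarrow> int) \<times> (nat \<Rightarrow> int) \<Rightarrow> 'a" where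
  "psi x = (case x of (p, m, k) \<Rightarrow> s [^] p \<otimes> Pf a LL m \<otimes> Pf b LL k)"

lemma PA_c: "Pf a LL m \<in> carrier Q" by (rule Pf_c) (auto intro: a_c)
lemma PB_c: "Pf b LL m \<in> carrier Q" by (rule Pf_c) (auto intro: b_c)

lemma psi_c: "psi x \<in> carrier Q"
  using s_c PA_c PB_c by (cases x) (simp add: psi_def)

lemma psi_one: "psi (0, (\<lambda>_. 0), (\<lambda>_. 0)) = \<one>"
proof -
  have "Pf f L (\<lambda>_. 0) = \<one>" for f L by (induction L) auto
  then show ?thesis by (simp add: psi_def)
qed

lemma sp_PA: "s [^] (q::int) \<otimes> Pf a LL m = Pf a LL m \<otimes> s [^] q"
  by (rule Pf_comm) (use s_c a_c s_a comm_int in auto)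

lemma sp_PB: "s [^] (q::int) \<otimes> Pf b LL m = Pf b LL m \<otimes> s [^] q"
  by (rule Pf_comm) (use s_c b_c s_b comm_int in auto)

lemma sp_PA': "w \<in> carrier Q \<Longrightarrow> Pf a LL m \<otimes> (s [^] (q::int) \<otimes> w) = s [^] q \<otimes> (Pf a LL m \<otimes> w)"
  using s_c PA_c by (simp add: m_assoc[symmetric] sp_PA)

lemma psi_s: "psi (p, m, k) \<otimes> s = psi (p + 1, m, k)"
proof -
  have s1: "s [^] (1::int) = s" using s_c by simp
  have "psi (p, m, k) \<otimes> s = s [^] p \<otimes> Pf a LL m \<otimes> (Pf b LL k \<otimes> s [^] (1::int))"
    using s_c PA_c PB_c by (simp add: psi_def m_assoc)
  also have "\<dots> = s [^] p \<otimes> (Pf a LL m \<otimes> s [^] (1::int)) \<otimes> Pf b LL k"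
    using s_c PA_c PB_c by (simp add: sp_PB[symmetric] m_assoc del: int_pow_1)
  also have "\<dots> = s [^] p \<otimes> s [^] (1::int) \<otimes> Pf a LL m \<otimes> Pf b LL k"
    using s_c PA_c PB_c by (simp add: sp_PA[symmetric] m_assoc del: int_pow_1)
  also have "\<dots> = psi (p + 1, m, k)"
    using s_c by (simp add: psi_def int_pow_mult del: int_pow_1)
  finally show ?thesis .
qed

lemma psi_b: assumes j: "j \<in> {1..g}" shows "psi (p, m, k) \<otimes> b j = psi (p, m, k(j := k j + 1))"
proof -
  have "Pf b LL k \<otimes> b j [^] (1::int) = Pf b LL (k(j := k j + 1))"
    by (rule Pf_mult) (use j b_c b_b in auto)
  then show ?thesis using s_c PA_c PB_c b_c[OF j] by (simp add: psi_def m_assoc)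
qed

lemma psi_a: assumes j: "j \<in> {1..g}" shows "psi (p, m, k) \<otimes> a j = psi (p - 2 * k j, m(j := m j + 1), k)"
proof -
  define z where "z = s [^] (-2::int)"
  have zc: "z \<in> carrier Q" using s_c by (simp add: z_def)
  have ajc: "a j \<in> carrier Q" using a_c[OF j] .
  have baj: "b j \<otimes> a j = z \<otimes> a j \<otimes> b j"
  proof -
    have "z \<otimes> (a j \<otimes> b j) = z \<otimes> (s [^] (2::int) \<otimes> b j \<otimes> a j)" by (simp add: ab[OF j])
    also have "\<dots> = (z \<otimes> s [^] (2::int)) \<otimes> b j \<otimes> a j" using zc s_c ajc b_c[OF j] by (simp add: m_assoc)
    also have "z \<otimes> s [^] (2::int) = \<one>" using s_c by (simp add: z_def int_pow_mult[symmetric])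
    finally show ?thesis using zc ajc b_c[OF j] by (simp add: m_assoc)
  qed
  have tw: "Pf b LL k \<otimes> a j = z [^] (if j \<in> set LL then k j else 0) \<otimes> a j \<otimes> Pf b LL k"
  proof (rule Pf_twist)
    show "a j \<otimes> z = z \<otimes> a j" "\<And>i. i \<in> set LL \<Longrightarrow> b i \<otimes> z = z \<otimes> b i"
      using comm_int[OF s_c a_c, of j "-2"] comm_int[OF s_c b_c, of _ "-2"] s_a s_b j
      unfolding z_def by auto
    fix i assume i: "i \<in> set LL"
    show "b i \<otimes> a j = (if i = j then z else \<one>) \<otimes> a j \<otimes> b i"
    proof (cases "i = j")
      case True then show ?thesis using baj by simp
    next
      case False then show ?thesis using a_b[OF j _ False[symmetric]] i ajc b_c by auto
    qed
  qed (use b_c ajc zc in auto)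
  have zk: "z [^] k j = s [^] (- 2 * k j)"
    using j s_c by (simp add: z_def int_pow_pow)
  have tw2: "Pf b LL k \<otimes> a j = s [^] (- 2 * k j) \<otimes> a j \<otimes> Pf b LL k"
    using tw j by (simp only: zk LL_set if_True)
  have "psi (p, m, k) \<otimes> a j = s [^] p \<otimes> Pf a LL m \<otimes> (s [^] (- 2 * k j) \<otimes> a j \<otimes> Pf b LL k)"
    using s_c PA_c PB_c ajc by (simp add: psi_def m_assoc tw2 del: mult_minus_left)
  also have "\<dots> = s [^] p \<otimes> s [^] (- 2 * k j) \<otimes> (Pf a LL m \<otimes> a j [^] (1::int)) \<otimes> Pf b LL k"
    using s_c PA_c PB_c ajc by (simp add: m_assoc sp_PA')
  also have "Pf a LL m \<otimes> a j [^] (1::int) = Pf a LL (m(j := m j + 1))"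
    by (rule Pf_mult) (use j a_c a_a in auto)
  also have "s [^] p \<otimes> s [^] (- 2 * k j) = s [^] (p - 2 * k j)"
    using s_c by (simp add: int_pow_mult[symmetric])
  finally show ?thesis by (simp add: psi_def fun_upd_def)
qed

end


lemma (in group) cc_braid:
  assumes cc: "\<And>u v w. u \<in> carrier G \<Longrightarrow> v \<in> carrier G \<Longrightarrow> w \<in> carrier G \<Longrightarrow>
      u \<otimes> (v \<otimes> w \<otimes> inv v \<otimes> inv w) = (v \<otimes> w \<otimes> inv v \<otimes> inv w) \<otimes> u"
    and x: "x \<in> carrier G" and y: "y \<in> carrier G" and br: "x \<otimes> y \<otimes> x = y \<otimes> x \<otimes> y"
  shows "x = y"
proof -
  define d where "d = y \<otimes> x \<otimes> inv y \<otimes> inv x"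
  have dc: "d \<in> carrier G" using x y by (simp add: d_def)
  have yx: "y \<otimes> x = d \<otimes> x \<otimes> y" using x y by (simp add: d_def m_assoc)
  have xd: "x \<otimes> d = d \<otimes> x" unfolding d_def by (rule cc[OF x y x])
  have "d \<otimes> x \<otimes> x \<otimes> y = x \<otimes> (d \<otimes> x \<otimes> y)" using x y dc by (simp add: m_assoc[symmetric] xd)
  also have "\<dots> = x \<otimes> y \<otimes> x" using x y dc by (simp add: yx[symmetric] m_assoc)
  also have "\<dots> = y \<otimes> x \<otimes> y" by (rule br)
  also have "\<dots> = d \<otimes> x \<otimes> y \<otimes> y" by (simp add: yx)
  finally have "(d \<otimes> x) \<otimes> (x \<otimes> y) = (d \<otimes> x) \<otimes> (y \<otimes> y)" using x y dc by (simp add: m_assoc)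
  then have "x \<otimes> y = y \<otimes> y" using x y dc by simp
  then show ?thesis using x y by simp
qed

lemma bgens_Sig: "1 \<le> i \<Longrightarrow> i \<le> n - 1 \<Longrightarrow> Sig i \<in> bgens n g" by (simp add: bgens_def)
lemma bgens_A: "l \<in> {1..g} \<Longrightarrow> A l \<in> bgens n g" by (simp add: bgens_def)
lemma bgens_B: "l \<in> {1..g} \<Longrightarrow> B l \<in> bgens n g" by (simp add: bgens_def)

definition gen :: "nat \<Rightarrow> nat \<Rightarrow> bgen \<Rightarrow> bgen word set" where
  "gen n g x = word_class (braid_rels n g) [(x, False)]"

lemma gen_c: "x \<in> bgens n g \<Longrightarrow> gen n g x \<in> carrier (braid_group n g)"
  by (simp add: gen_def braid_group_def pg_carrier)

lemma gen_inv: "x \<in> bgens n g \<Longrightarrow> inv\<^bsub>braid_group n g\<^esub> gen n g x = word_class (braid_rels n g) [(x, True)]"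
  by (simp add: gen_def braid_group_def pg_inv)

lemma gen_mult: "word_class (braid_rels n g) u \<otimes>\<^bsub>braid_group n g\<^esub> word_class (braid_rels n g) v = word_class (braid_rels n g) (u @ v)"
  by (simp add: braid_group_def pg_mult)

lemma G_E1: assumes "1 \<le> i" "i \<le> n - 2"
  shows "gen n g (Sig i) \<otimes>\<^bsub>braid_group n g\<^esub> gen n g (Sig (i+1)) \<otimes>\<^bsub>braid_group n g\<^esub> gen n g (Sig i) =
         gen n g (Sig (i+1)) \<otimes>\<^bsub>braid_group n g\<^esub> gen n g (Sig i) \<otimes>\<^bsub>braid_group n g\<^esub> gen n g (Sig (i+1))"
proof -
  have "(lt (Sig i) @ lt (Sig (i+1)) @ lt (Sig i), lt (Sig (i+1)) @ lt (Sig i) @ lt (Sig (i+1))) \<in> braid_rels n g"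
    using assms unfolding braid_rels_def by blast
  then show ?thesis by (simp add: gen_def gen_mult pg_rel)
qed

lemma G_E3: assumes "l \<in> {1..g}" "c \<in> {A l, B l}" "2 \<le> j" "j \<le> n - 1"
  shows "gen n g c \<otimes>\<^bsub>braid_group n g\<^esub> gen n g (Sig j) = gen n g (Sig j) \<otimes>\<^bsub>braid_group n g\<^esub> gen n g c"
proof -
  have "(lt c @ lt (Sig j), lt (Sig j) @ lt c) \<in> braid_rels n g"
    using assms unfolding braid_rels_def by auto
  then show ?thesis by (simp add: gen_def gen_mult pg_rel)
qed

lemma G_E5: assumes "l \<in> {1..g}"
  shows "gen n g (A l) \<otimes>\<^bsub>braid_group n g\<^esub> gen n g (Sig 1) \<otimes>\<^bsub>braid_group n g\<^esub> gen n g (B l) =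
    gen n g (Sig 1) \<otimes>\<^bsub>braid_group n g\<^esub> gen n g (B l) \<otimes>\<^bsub>braid_group n g\<^esub> gen n g (Sig 1)
    \<otimes>\<^bsub>braid_group n g\<^esub> gen n g (A l) \<otimes>\<^bsub>braid_group n g\<^esub> gen n g (Sig 1)"
proof -
  have "(lt (A l) @ lt (Sig 1) @ lt (B l), lt (Sig 1) @ lt (B l) @ lt (Sig 1) @ lt (A l) @ lt (Sig 1)) \<in> braid_rels n g"
    using assms unfolding braid_rels_def by auto
  then show ?thesis by (simp add: gen_def gen_mult pg_rel)
qed

lemma G_E6: assumes "1 \<le> j" "j < i" "i \<le> g" "ci \<in> {A i, B i}" "cj \<in> {A j, B j}" "n \<ge> 2"
  shows "gen n g ci \<otimes>\<^bsub>braid_group n g\<^esub> inv\<^bsub>braid_group n g\<^esub> gen n g (Sig 1) \<otimes>\<^bsub>braid_group n g\<^esub> gen n g cj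
     \<otimes>\<^bsub>braid_group n g\<^esub> gen n g (Sig 1) =
    inv\<^bsub>braid_group n g\<^esub> gen n g (Sig 1) \<otimes>\<^bsub>braid_group n g\<^esub> gen n g cj \<otimes>\<^bsub>braid_group n g\<^esub> gen n g (Sig 1)
     \<otimes>\<^bsub>braid_group n g\<^esub> gen n g ci"
proof -
  have "(lt ci @ lti (Sig 1) @ lt cj @ lt (Sig 1), lti (Sig 1) @ lt cj @ lt (Sig 1) @ lt ci) \<in> braid_rels n g"
    using assms unfolding braid_rels_def by blast
  moreover have "Sig 1 \<in> bgens n g" using assms by (simp add: bgens_def)
  ultimately show ?thesis by (simp add: gen_inv) (simp add: gen_def gen_mult pg_rel)
qed


lemma (in group) comm_from_comm1:
  assumes "x \<in> carrier G" "y \<in> carrier G" "x \<otimes> y \<otimes> inv x \<otimes> inv y = \<one>"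
  shows "x \<otimes> y = y \<otimes> x"
proof -
  have c: "\<And>a b. a \<in> carrier G \<Longrightarrow> b \<in> carrier G \<Longrightarrow> inv a \<otimes> (a \<otimes> b) = b"
    by (simp add: m_assoc[symmetric])
  have "x \<otimes> y = (x \<otimes> y \<otimes> inv x \<otimes> inv y) \<otimes> (y \<otimes> x)"
    using assms(1,2) by (simp add: m_assoc c)
  then show ?thesis using assms by simp
qed

lemma (in group) rel5:
  assumes a: "a \<in> carrier G" and b: "b \<in> carrier G" and s: "s \<in> carrier G"
    and sa: "s \<otimes> a = a \<otimes> s" and sb: "s \<otimes> b = b \<otimes> s"
    and r: "a \<otimes> s \<otimes> b = s \<otimes> b \<otimes> s \<otimes> a \<otimes> s"
  shows "a \<otimes> b = s [^] (2::int) \<otimes> b \<otimes> a"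
proof -
  have s2a: "s [^] (2::int) = s [^] (2::nat)" using int_pow_int[of G s 2] by simp
  have s2: "s [^] (2::int) = s \<otimes> s" using s by (simp add: s2a numeral_2_eq_2)
  have "s \<otimes> (a \<otimes> b) = a \<otimes> s \<otimes> b" using a b s by (simp add: m_assoc[symmetric] sa)
  also have "\<dots> = s \<otimes> b \<otimes> s \<otimes> a \<otimes> s" by (rule r)
  also have "\<dots> = s \<otimes> (s \<otimes> s \<otimes> b \<otimes> a)"
  proof -
    have "s \<otimes> b \<otimes> s \<otimes> a \<otimes> s = s \<otimes> (b \<otimes> s) \<otimes> (a \<otimes> s)" using a b s by (simp add: m_assoc)
    also have "\<dots> = s \<otimes> (s \<otimes> b) \<otimes> (s \<otimes> a)" by (simp add: sa sb)
    also have "\<dots> = s \<otimes> s \<otimes> (b \<otimes> s) \<otimes> a" using a b s by (simp add: m_assoc)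
    also have "\<dots> = s \<otimes> s \<otimes> (s \<otimes> b) \<otimes> a" by (simp add: sb)
    finally show ?thesis using a b s by (simp add: m_assoc)
  qed
  finally have "a \<otimes> b = s \<otimes> s \<otimes> b \<otimes> a" using a b s by simp
  then show ?thesis by (simp add: s2)
qed

lemma (in group) rel6:
  assumes a: "a \<in> carrier G" and b: "b \<in> carrier G" and s: "s \<in> carrier G"
    and sa: "s \<otimes> a = a \<otimes> s" and sb: "s \<otimes> b = b \<otimes> s"
    and r: "a \<otimes> inv s \<otimes> b \<otimes> s = inv s \<otimes> b \<otimes> s \<otimes> a"
  shows "a \<otimes> b = b \<otimes> a"
proof -
  have c: "\<And>x y. x \<in> carrier G \<Longrightarrow> y \<in> carrier G \<Longrightarrow> inv x \<otimes> (x \<otimes> y) = y"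
    by (simp add: m_assoc[symmetric])
  have "a \<otimes> inv s \<otimes> b \<otimes> s = a \<otimes> (inv s \<otimes> (b \<otimes> s))" using a b s by (simp add: m_assoc)
  also have "\<dots> = a \<otimes> b" using a b s by (simp add: sb[symmetric] c)
  finally have l: "a \<otimes> inv s \<otimes> b \<otimes> s = a \<otimes> b" .
  have "inv s \<otimes> b \<otimes> s \<otimes> a = inv s \<otimes> (b \<otimes> s) \<otimes> a" using a b s by (simp add: m_assoc)
  also have "\<dots> = b \<otimes> a" using a b s by (simp add: sb[symmetric] c m_assoc)
  finally show ?thesis using r l by simp
qed

locale bq = fixes n g :: nat assumes n3: "n \<ge> 3"
begin

abbreviation "GG \<equiv> braid_group n g"
abbreviation "NN \<equiv> lcs GG 2"
abbreviation "QQ \<equiv> GG Mod NN"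
abbreviation "pp x \<equiv> NN #>\<^bsub>GG\<^esub> x"

lemma GG: "group GG" by (rule braid_group_group)
lemma NN_normal: "NN \<lhd> GG" by (rule group.lcs_normal[OF GG])
lemma QQ: "group QQ" by (rule normal.factorgroup_is_group[OF NN_normal])
lemma pp_hom: "(\<lambda>x. pp x) \<in> hom GG QQ" by (rule normal.r_coset_hom_Mod[OF NN_normal])
lemma pp_ghom: "group_hom GG QQ (\<lambda>x. pp x)"
  by (simp add: group_hom_def group_hom_axioms_def GG QQ pp_hom)

lemma GG_mc: "x \<in> carrier GG \<Longrightarrow> y \<in> carrier GG \<Longrightarrow> x \<otimes>\<^bsub>GG\<^esub> y \<in> carrier GG"
  by (rule monoid.m_closed[OF group.is_monoid[OF GG]])
lemma GG_ic: "x \<in> carrier GG \<Longrightarrow> inv\<^bsub>GG\<^esub> x \<in> carrier GG"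
  by (rule group.inv_closed[OF GG])

lemma QQ_one: "\<one>\<^bsub>QQ\<^esub> = NN" by (simp add: FactGroup_def)

lemma QQ_carrierE:
  assumes "u \<in> carrier QQ" obtains x where "x \<in> carrier GG" "u = pp x"
  using assms by (auto simp: FactGroup_def RCOSETS_def)

lemma pp_mult: "x \<in> carrier GG \<Longrightarrow> y \<in> carrier GG \<Longrightarrow> pp (x \<otimes>\<^bsub>GG\<^esub> y) = pp x \<otimes>\<^bsub>QQ\<^esub> pp y"
  using pp_hom by (simp add: hom_def)

lemma pp_inv: "x \<in> carrier GG \<Longrightarrow> pp (inv\<^bsub>GG\<^esub> x) = inv\<^bsub>QQ\<^esub> pp x"
  by (rule group_hom.hom_inv[OF pp_ghom])

lemma pp_c: "x \<in> carrier GG \<Longrightarrow> pp x \<in> carrier QQ"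
  using pp_hom by (simp add: hom_def Pi_def)

lemma pp_N: "x \<in> NN \<Longrightarrow> pp x = \<one>\<^bsub>QQ\<^esub>"
  using subgroup.rcos_const[OF normal_imp_subgroup[OF NN_normal] GG] by (simp add: QQ_one)

lemma Qcc:
  assumes u: "u \<in> carrier QQ" and v: "v \<in> carrier QQ" and w: "w \<in> carrier QQ"
  shows "u \<otimes>\<^bsub>QQ\<^esub> (v \<otimes>\<^bsub>QQ\<^esub> w \<otimes>\<^bsub>QQ\<^esub> inv\<^bsub>QQ\<^esub> v \<otimes>\<^bsub>QQ\<^esub> inv\<^bsub>QQ\<^esub> w) =
    (v \<otimes>\<^bsub>QQ\<^esub> w \<otimes>\<^bsub>QQ\<^esub> inv\<^bsub>QQ\<^esub> v \<otimes>\<^bsub>QQ\<^esub> inv\<^bsub>QQ\<^esub> w) \<otimes>\<^bsub>QQ\<^esub> u"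
proof -
  interpret G: group GG by (rule GG)
  interpret Q: group QQ by (rule QQ)
  obtain x where x: "x \<in> carrier GG" "u = pp x" using u by (rule QQ_carrierE)
  obtain y where y: "y \<in> carrier GG" "v = pp y" using v by (rule QQ_carrierE)
  obtain z where z: "z \<in> carrier GG" "w = pp z" using w by (rule QQ_carrierE)
  define c where "c = y \<otimes>\<^bsub>GG\<^esub> z \<otimes>\<^bsub>GG\<^esub> inv\<^bsub>GG\<^esub> y \<otimes>\<^bsub>GG\<^esub> inv\<^bsub>GG\<^esub> z"
  have cc: "c \<in> carrier GG" using y z by (simp add: c_def)
  have c1: "c \<in> lcs GG 1" unfolding One_nat_def lcs.simps c_def
    by (rule generate.incl) (use y z in auto)
  define e where "e = x \<otimes>\<^bsub>GG\<^esub> c \<otimes>\<^bsub>GG\<^esub> inv\<^bsub>GG\<^esub> x \<otimes>\<^bsub>GG\<^esub> inv\<^bsub>GG\<^esub> c"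
  have "e \<in> NN" unfolding numeral_2_eq_2 lcs.simps(2)[of GG "Suc 0"] e_def
    by (rule generate.incl) (use x c1 in \<open>auto simp: One_nat_def\<close>)
  then have "pp e = \<one>\<^bsub>QQ\<^esub>" by (rule pp_N)
  moreover have "pp e = pp x \<otimes>\<^bsub>QQ\<^esub> pp c \<otimes>\<^bsub>QQ\<^esub> inv\<^bsub>QQ\<^esub> pp x \<otimes>\<^bsub>QQ\<^esub> inv\<^bsub>QQ\<^esub> pp c"
    using x cc by (simp add: e_def pp_mult pp_inv)
  moreover have pc: "pp c = v \<otimes>\<^bsub>QQ\<^esub> w \<otimes>\<^bsub>QQ\<^esub> inv\<^bsub>QQ\<^esub> v \<otimes>\<^bsub>QQ\<^esub> inv\<^bsub>QQ\<^esub> w"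
    using y z by (simp add: c_def pp_mult pp_inv)
  ultimately have h: "u \<otimes>\<^bsub>QQ\<^esub> pp c \<otimes>\<^bsub>QQ\<^esub> inv\<^bsub>QQ\<^esub> u \<otimes>\<^bsub>QQ\<^esub> inv\<^bsub>QQ\<^esub> pp c = \<one>\<^bsub>QQ\<^esub>"
    using x by simp
  have pcc: "pp c \<in> carrier QQ" using cc by (rule pp_c)
  have "u \<otimes>\<^bsub>QQ\<^esub> pp c = pp c \<otimes>\<^bsub>QQ\<^esub> u"
    by (rule group.comm_from_comm1[OF QQ u pcc h])
  then show ?thesis unfolding pc .
qed

definition "sq = pp (gen n g (Sig 1))"
definition "aq l = pp (gen n g (A l))"
definition "bq' l = pp (gen n g (B l))"

lemma Sig1: "Sig 1 \<in> bgens n g" using n3 by (simp add: bgens_def)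

lemma QSig: "1 \<le> i \<Longrightarrow> i \<le> n - 1 \<Longrightarrow> pp (gen n g (Sig i)) = sq"
proof -
  have "Suc k \<le> n - 1 \<Longrightarrow> pp (gen n g (Sig (Suc k))) = sq" for k
  proof (induction k)
    case 0 then show ?case by (simp add: sq_def)
  next
    case (Suc k)
    have c1: "gen n g (Sig (Suc k)) \<in> carrier GG" using Suc by (intro gen_c bgens_Sig) auto
    have c2: "gen n g (Sig (Suc k + 1)) \<in> carrier GG" using Suc by (intro gen_c bgens_Sig) auto
    have "pp (gen n g (Sig (Suc k)) \<otimes>\<^bsub>GG\<^esub> gen n g (Sig (Suc k+1)) \<otimes>\<^bsub>GG\<^esub> gen n g (Sig (Suc k))) =
          pp (gen n g (Sig (Suc k+1)) \<otimes>\<^bsub>GG\<^esub> gen n g (Sig (Suc k)) \<otimes>\<^bsub>GG\<^esub> gen n g (Sig (Suc k+1)))"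
      using Suc by (subst G_E1) auto
    then have br: "pp (gen n g (Sig (Suc k))) \<otimes>\<^bsub>QQ\<^esub> pp (gen n g (Sig (Suc k+1))) \<otimes>\<^bsub>QQ\<^esub> pp (gen n g (Sig (Suc k))) =
          pp (gen n g (Sig (Suc k+1))) \<otimes>\<^bsub>QQ\<^esub> pp (gen n g (Sig (Suc k))) \<otimes>\<^bsub>QQ\<^esub> pp (gen n g (Sig (Suc k+1)))"
      using c1 c2 by (simp add: pp_mult GG_mc del: mult_FactGroup one_FactGroup)
    have "pp (gen n g (Sig (Suc k))) = pp (gen n g (Sig (Suc k+1)))"
      using group.cc_braid[OF QQ Qcc pp_c[OF c1] pp_c[OF c2] br] .
    then show ?case using Suc by simp
  qed
  moreover assume "1 \<le> i" "i \<le> n - 1"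
  ultimately show ?thesis by (cases i) auto
qed

lemma sq_c: "sq \<in> carrier QQ" unfolding sq_def by (intro pp_c gen_c Sig1)
lemma aq_c: "l \<in> {1..g} \<Longrightarrow> aq l \<in> carrier QQ" unfolding aq_def by (intro pp_c gen_c bgens_A)
lemma bq_c: "l \<in> {1..g} \<Longrightarrow> bq' l \<in> carrier QQ" unfolding bq'_def by (intro pp_c gen_c bgens_B)

lemma Sig2: "Sig 2 \<in> bgens n g" using n3 by (simp add: bgens_def)

lemma Q_sc: assumes l: "l \<in> {1..g}" and c: "c \<in> {A l, B l}"
  shows "sq \<otimes>\<^bsub>QQ\<^esub> pp (gen n g c) = pp (gen n g c) \<otimes>\<^bsub>QQ\<^esub> sq"
proof -
  have cc: "c \<in> bgens n g" using l c bgens_A bgens_B by auto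
  have "pp (gen n g c \<otimes>\<^bsub>GG\<^esub> gen n g (Sig 2)) = pp (gen n g (Sig 2) \<otimes>\<^bsub>GG\<^esub> gen n g c)"
    using l c n3 by (subst G_E3) auto
  then have "pp (gen n g c) \<otimes>\<^bsub>QQ\<^esub> pp (gen n g (Sig 2)) = pp (gen n g (Sig 2)) \<otimes>\<^bsub>QQ\<^esub> pp (gen n g c)"
    using cc Sig2 by (simp add: pp_mult gen_c del: mult_FactGroup one_FactGroup)
  moreover have "pp (gen n g (Sig 2)) = sq" using n3 by (intro QSig) auto
  ultimately show ?thesis by simp
qed

lemma Q_sa: "l \<in> {1..g} \<Longrightarrow> sq \<otimes>\<^bsub>QQ\<^esub> aq l = aq l \<otimes>\<^bsub>QQ\<^esub> sq"
  unfolding aq_def by (rule Q_sc) auto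
lemma Q_sb: "l \<in> {1..g} \<Longrightarrow> sq \<otimes>\<^bsub>QQ\<^esub> bq' l = bq' l \<otimes>\<^bsub>QQ\<^esub> sq"
  unfolding bq'_def by (rule Q_sc) auto

lemma Q_ab: assumes l: "l \<in> {1..g}"
  shows "aq l \<otimes>\<^bsub>QQ\<^esub> bq' l = sq [^]\<^bsub>QQ\<^esub> (2::int) \<otimes>\<^bsub>QQ\<^esub> bq' l \<otimes>\<^bsub>QQ\<^esub> aq l"
proof (rule group.rel5[OF QQ aq_c[OF l] bq_c[OF l] sq_c Q_sa[OF l] Q_sb[OF l]])
  have c: "gen n g (A l) \<in> carrier GG" "gen n g (B l) \<in> carrier GG" "gen n g (Sig 1) \<in> carrier GG"
    using gen_c[OF bgens_A[OF l]] gen_c[OF bgens_B[OF l]] gen_c[OF Sig1] by auto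
  have "pp (gen n g (A l) \<otimes>\<^bsub>GG\<^esub> gen n g (Sig 1) \<otimes>\<^bsub>GG\<^esub> gen n g (B l)) =
    pp (gen n g (Sig 1) \<otimes>\<^bsub>GG\<^esub> gen n g (B l) \<otimes>\<^bsub>GG\<^esub> gen n g (Sig 1)
    \<otimes>\<^bsub>GG\<^esub> gen n g (A l) \<otimes>\<^bsub>GG\<^esub> gen n g (Sig 1))"
    using l by (subst G_E5) auto
  then show "aq l \<otimes>\<^bsub>QQ\<^esub> sq \<otimes>\<^bsub>QQ\<^esub> bq' l =
      sq \<otimes>\<^bsub>QQ\<^esub> bq' l \<otimes>\<^bsub>QQ\<^esub> sq \<otimes>\<^bsub>QQ\<^esub> aq l \<otimes>\<^bsub>QQ\<^esub> sq"
    using c by (simp add: pp_mult GG_mc aq_def bq'_def sq_def del: mult_FactGroup one_FactGroup)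
qed

lemma Q_6: assumes "1 \<le> j" "j < i" "i \<le> g" "ci \<in> {A i, B i}" "cj \<in> {A j, B j}"
  shows "pp (gen n g ci) \<otimes>\<^bsub>QQ\<^esub> pp (gen n g cj) = pp (gen n g cj) \<otimes>\<^bsub>QQ\<^esub> pp (gen n g ci)"
proof -
  have ci: "ci \<in> bgens n g" "i \<in> {1..g}" using assms bgens_A bgens_B by auto
  have cj: "cj \<in> bgens n g" "j \<in> {1..g}" using assms bgens_A bgens_B by auto
  have c: "gen n g ci \<in> carrier GG" "gen n g cj \<in> carrier GG" "gen n g (Sig 1) \<in> carrier GG"
    using ci cj Sig1 by (auto intro: gen_c)
  show ?thesis
  proof (rule group.rel6[OF QQ pp_c[OF c(1)] pp_c[OF c(2)] sq_c])
    show "sq \<otimes>\<^bsub>QQ\<^esub> pp (gen n g ci) = pp (gen n g ci) \<otimes>\<^bsub>QQ\<^esub> sq" using ci assms by (intro Q_sc) auto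
    show "sq \<otimes>\<^bsub>QQ\<^esub> pp (gen n g cj) = pp (gen n g cj) \<otimes>\<^bsub>QQ\<^esub> sq" using cj assms by (intro Q_sc) auto
    have "pp (gen n g ci \<otimes>\<^bsub>GG\<^esub> inv\<^bsub>GG\<^esub> gen n g (Sig 1) \<otimes>\<^bsub>GG\<^esub> gen n g cj
       \<otimes>\<^bsub>GG\<^esub> gen n g (Sig 1)) =
      pp (inv\<^bsub>GG\<^esub> gen n g (Sig 1) \<otimes>\<^bsub>GG\<^esub> gen n g cj \<otimes>\<^bsub>GG\<^esub> gen n g (Sig 1)
       \<otimes>\<^bsub>GG\<^esub> gen n g ci)"
      using assms n3 by (subst G_E6) auto
    then show "pp (gen n g ci) \<otimes>\<^bsub>QQ\<^esub> inv\<^bsub>QQ\<^esub> sq \<otimes>\<^bsub>QQ\<^esub> pp (gen n g cj) \<otimes>\<^bsub>QQ\<^esub> sq =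
      inv\<^bsub>QQ\<^esub> sq \<otimes>\<^bsub>QQ\<^esub> pp (gen n g cj) \<otimes>\<^bsub>QQ\<^esub> sq \<otimes>\<^bsub>QQ\<^esub> pp (gen n g ci)"
      using c by (simp add: pp_mult pp_inv GG_mc GG_ic sq_def del: mult_FactGroup one_FactGroup)
  qed
qed

end


lemma sum_kdelta: "finite II \<Longrightarrow> l \<in> II \<Longrightarrow> (\<Sum>i\<in>II. (k i::int) * (if i = l then 1 else 0)) = k l"
proof -
  assume "finite II" "l \<in> II"
  have "(\<Sum>i\<in>II. (k i::int) * (if i = l then 1 else 0)) = (\<Sum>i\<in>II. if i = l then k l else 0)"
    by (rule sum.cong) auto
  then show ?thesis using \<open>finite II\<close> \<open>l \<in> II\<close> by simp
qed

context bq begin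

lemma Q_aa: "i \<in> {1..g} \<Longrightarrow> j \<in> {1..g} \<Longrightarrow> aq i \<otimes>\<^bsub>QQ\<^esub> aq j = aq j \<otimes>\<^bsub>QQ\<^esub> aq i"
  unfolding aq_def using Q_6[of j i "A i" "A j"] Q_6[of i j "A j" "A i"]
  by (cases i j rule: linorder_cases) auto
lemma Q_bb: "i \<in> {1..g} \<Longrightarrow> j \<in> {1..g} \<Longrightarrow> bq' i \<otimes>\<^bsub>QQ\<^esub> bq' j = bq' j \<otimes>\<^bsub>QQ\<^esub> bq' i"
  unfolding bq'_def using Q_6[of j i "B i" "B j"] Q_6[of i j "B j" "B i"]
  by (cases i j rule: linorder_cases) auto
lemma Q_abne: "i \<in> {1..g} \<Longrightarrow> j \<in> {1..g} \<Longrightarrow> i \<noteq> j \<Longrightarrow> aq i \<otimes>\<^bsub>QQ\<^esub> bq' j = bq' j \<otimes>\<^bsub>QQ\<^esub> aq i"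
  unfolding aq_def bq'_def using Q_6[of j i "A i" "B j"] Q_6[of i j "B j" "A i"]
  by (cases i j rule: linorder_cases) auto

lemma nf: "nf QQ sq aq bq' g"
  apply (rule nf.intro[OF QQ])
  apply (rule nf_axioms.intro)
  apply (rule sq_c)
  apply (erule aq_c)
  apply (erule bq_c)
  apply (erule Q_sa)
  apply (erule Q_sb)
  apply (erule (1) Q_aa)
  apply (erule (1) Q_bb)
  apply (erule (2) Q_abne)
  apply (erule Q_ab)
  done

abbreviation "PSI \<equiv> nf.psi QQ sq aq bq' g"

lemma gl_pos:
  assumes x: "x \<in> bgens n g" and u: "u \<in> carrier (sd_group g)"
  shows "PSI u \<otimes>\<^bsub>QQ\<^esub> pp (gen n g x) = PSI (u \<otimes>\<^bsub>sd_group g\<^esub> gval g x False)"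
proof -
  interpret N: nf QQ sq aq bq' g by (rule nf)
  obtain p m k where u': "u = (p, m, k)" by (cases u)
  from x consider (S) i where "x = Sig i" "1 \<le> i" "i \<le> n - 1" | (A) l where "x = A l" "l \<in> {1..g}"
    | (B) l where "x = B l" "l \<in> {1..g}"
    unfolding bgens_def by auto
  then show ?thesis
  proof cases
    case S
    then show ?thesis using N.psi_s[of p m k] by (simp add: u' QSig)
  next
    case A
    have "u \<otimes>\<^bsub>sd_group g\<^esub> gval g x False = (p - 2 * k l, m(l := m l + 1), k)"
      using A by (simp add: u' sum_kdelta fun_eq_iff del: atLeastAtMost_iff)
    then show ?thesis using A N.psi_a[of l p m k] by (simp add: u' aq_def)
  next
    case B
    have "u \<otimes>\<^bsub>sd_group g\<^esub> gval g x False = (p, m, k(l := k l + 1))"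
      using B by (simp add: u' fun_eq_iff del: atLeastAtMost_iff)
    then show ?thesis using B N.psi_b[of l p m k] by (simp add: u' bq'_def)
  qed
qed

lemma gl_neg:
  assumes x: "x \<in> bgens n g" and u: "u \<in> carrier (sd_group g)"
  shows "PSI u \<otimes>\<^bsub>QQ\<^esub> inv\<^bsub>QQ\<^esub> pp (gen n g x) = PSI (u \<otimes>\<^bsub>sd_group g\<^esub> gval g x True)"
proof -
  interpret N: nf QQ sq aq bq' g by (rule nf)
  interpret S: group "sd_group g" by (rule sd_group)
  have t: "pp (gen n g x) \<in> carrier QQ" by (intro pp_c gen_c x)
  have t': "gval g x False \<in> carrier (sd_group g)" by simp
  define u' where "u' = u \<otimes>\<^bsub>sd_group g\<^esub> inv\<^bsub>sd_group g\<^esub> gval g x False"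
  have u'c: "u' \<in> carrier (sd_group g)" using u t' by (simp add: u'_def del: sd_carrier)
  have "PSI u' \<otimes>\<^bsub>QQ\<^esub> pp (gen n g x) = PSI (u' \<otimes>\<^bsub>sd_group g\<^esub> gval g x False)"
    by (rule gl_pos[OF x u'c])
  also have "u' \<otimes>\<^bsub>sd_group g\<^esub> gval g x False = u"
    using u t' by (simp add: u'_def S.m_assoc del: sd_mult sd_carrier sd_one)
  finally have e: "PSI u' \<otimes>\<^bsub>QQ\<^esub> pp (gen n g x) = PSI u" .
  have "PSI u \<otimes>\<^bsub>QQ\<^esub> inv\<^bsub>QQ\<^esub> pp (gen n g x) = PSI u'"
    using e[symmetric] t N.psi_c by (simp add: N.m_assoc del: mult_FactGroup one_FactGroup)
  also have "PSI u' = PSI (u \<otimes>\<^bsub>sd_group g\<^esub> gval g x True)"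
    by (simp add: u'_def gval_def del: sd_mult)
  finally show ?thesis .
qed

lemma pp_word: "fst ` set w \<subseteq> bgens n g \<Longrightarrow> pp (word_class (braid_rels n g) w) = PSI (seval g w)"
proof (induction w rule: rev_induct)
  case Nil
  interpret N: nf QQ sq aq bq' g by (rule nf)
  have "pp (word_class (braid_rels n g) []) = \<one>\<^bsub>QQ\<^esub>"
    using group_hom.hom_one[OF pp_ghom] by (simp add: braid_group_def pg_one del: one_FactGroup)
  then show ?case using N.psi_one by (simp del: one_FactGroup)
next
  case (snoc xe w)
  obtain x e where xe: "xe = (x, e)" by force
  have x: "x \<in> bgens n g" using snoc xe by auto
  have w: "fst ` set w \<subseteq> bgens n g" using snoc by auto
  have wc: "word_class (braid_rels n g) w \<in> carrier GG" using w by (simp add: braid_group_def pg_carrier)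
  have lc: "word_class (braid_rels n g) [(x, e)] \<in> carrier GG" using x by (simp add: braid_group_def pg_carrier)
  have "pp (word_class (braid_rels n g) (w @ [xe])) =
      pp (word_class (braid_rels n g) w) \<otimes>\<^bsub>QQ\<^esub> pp (word_class (braid_rels n g) [(x, e)])"
    using wc lc by (simp add: xe gen_mult[symmetric] pp_mult del: mult_FactGroup)
  also have "\<dots> = PSI (seval g w) \<otimes>\<^bsub>QQ\<^esub> pp (word_class (braid_rels n g) [(x, e)])"
    using snoc w by simp
  also have "\<dots> = PSI (seval g w \<otimes>\<^bsub>sd_group g\<^esub> gval g x e)"
  proof (cases e)
    case True
    have "word_class (braid_rels n g) [(x, e)] = inv\<^bsub>GG\<^esub> gen n g x" using True x by (simp add: gen_inv)
    then have "pp (word_class (braid_rels n g) [(x, e)]) = inv\<^bsub>QQ\<^esub> pp (gen n g x)"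
      using x by (simp add: pp_inv gen_c del: mult_FactGroup one_FactGroup)
    then show ?thesis using gl_neg[OF x eval_c] True by simp
  next
    case False
    then show ?thesis using gl_pos[OF x eval_c] by (simp add: gen_def)
  qed
  also have "seval g w \<otimes>\<^bsub>sd_group g\<^esub> gval g x e = seval g (w @ [xe])"
    by (simp add: xe eval_append monoid.r_one[OF sdM] del: sd_mult sd_one)
  finally show ?case .
qed

lemma kernel_sub: "kernel GG (sd_group g) (hmap n g) \<subseteq> NN"
proof
  interpret N: nf QQ sq aq bq' g by (rule nf)
  fix x assume "x \<in> kernel GG (sd_group g) (hmap n g)"
  then have xc: "x \<in> carrier GG" and hx: "hmap n g x = \<one>\<^bsub>sd_group g\<^esub>" by (auto simp: kernel_def simp del: sd_one)
  obtain w where w: "x = word_class (braid_rels n g) w" "fst ` set w \<subseteq> bgens n g"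
    using xc by (auto simp: braid_group_def elim: pg_carrierE)
  have "pp x = PSI (hmap n g x)" using w by (simp add: pp_word hmap_class)
  also have "\<dots> = \<one>\<^bsub>QQ\<^esub>" using hx N.psi_one by (simp del: one_FactGroup)
  finally have "pp x = NN" by simp
  moreover have "x \<in> pp x" by (rule group.rcos_self[OF GG xc normal_imp_subgroup[OF NN_normal]])
  ultimately show "x \<in> NN" by simp
qed

end


lemma bclass_gen: "bclass n g x = gen n g x" by (simp add: bclass_def pgen_def gen_def)

lemma hmap_gen: "hmap n g (gen n g x) = gv g x"
  by (simp add: gen_def hmap_class gval_def monoid.r_one[OF sdM] del: sd_mult sd_one)

lemma gv_simps: "gv g (Sig i) = sd_sigma" "l \<in> {1..g} \<Longrightarrow> gv g (A l) = sd_a l" "l \<in> {1..g} \<Longrightarrow> gv g (B l) = sd_b l"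
  by (simp_all add: gv_def del: atLeastAtMost_iff)

lemma hmap_coset:
  assumes x: "x \<in> carrier (braid_group n g)"
  shows "hmap n g ` (kernel (braid_group n g) (sd_group g) (hmap n g) #>\<^bsub>braid_group n g\<^esub> x) = {hmap n g x}"
proof -
  interpret H: group_hom "braid_group n g" "sd_group g" "hmap n g" by (rule hmap_group_hom)
  show ?thesis
  proof
    show "hmap n g ` (kernel (braid_group n g) (sd_group g) (hmap n g) #>\<^bsub>braid_group n g\<^esub> x) \<subseteq> {hmap n g x}"
      using x by (auto simp: r_coset_def kernel_def simp del: sd_one sd_mult)
    have "\<one>\<^bsub>braid_group n g\<^esub> \<in> kernel (braid_group n g) (sd_group g) (hmap n g)"
      by (simp add: kernel_def del: sd_one)
    then have "\<one>\<^bsub>braid_group n g\<^esub> \<otimes>\<^bsub>braid_group n g\<^esub> x \<in> kernel (braid_group n g) (sd_group g) (hmap n g) #>\<^bsub>braid_group n g\<^esub> x"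
      by (auto simp: r_coset_def)
    then show "{hmap n g x} \<subseteq> hmap n g ` (kernel (braid_group n g) (sd_group g) (hmap n g) #>\<^bsub>braid_group n g\<^esub> x)"
      using x by (metis H.G.l_one empty_subsetI image_eqI insert_subset)
  qed
qed

theorem mainTheorem3:
  fixes n g :: nat
  assumes "g \<ge> 1" and "n \<ge> 3"
  shows "let G = braid_group n g; N = Gamma G 3 in
           (\<forall>i j. 1 \<le> i \<and> i \<le> n - 1 \<and> 1 \<le> j \<and> j \<le> n - 1 \<longrightarrow>
               N #>\<^bsub>G\<^esub> bclass n g (Sig i) = N #>\<^bsub>G\<^esub> bclass n g (Sig j))
         \<and> (\<exists>\<phi>. \<phi> \<in> iso (G Mod N) (sd_group g)
               \<and> (\<forall>i. 1 \<le> i \<and> i \<le> n - 1 \<longrightarrow> \<phi> (N #>\<^bsub>G\<^esub> bclass n g (Sig i)) = sd_sigma)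
               \<and> (\<forall>l. 1 \<le> l \<and> l \<le> g \<longrightarrow>
                     \<phi> (N #>\<^bsub>G\<^esub> bclass n g (A l)) = sd_a l
                   \<and> \<phi> (N #>\<^bsub>G\<^esub> bclass n g (B l)) = sd_b l))"
proof -
  interpret bq n g using assms(2) by unfold_locales
  interpret H: group_hom "braid_group n g" "sd_group g" "hmap n g" by (rule hmap_group_hom)
  have Gam: "Gamma (braid_group n g) 3 = NN" by (simp add: Gamma_def)
  have K: "kernel (braid_group n g) (sd_group g) (hmap n g) = NN"
    using kernel_sub group.gamma3_kernel[OF GG hmap_hom] by blast
  have surj: "hmap n g ` carrier (braid_group n g) = carrier (sd_group g)"
  proof
    show "hmap n g ` carrier (braid_group n g) \<subseteq> carrier (sd_group g)" by auto
    show "carrier (sd_group g) \<subseteq> hmap n g ` carrier (braid_group n g)"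
    proof (rule sd_gen_all[OF H.img_is_subgroup])
      show "sd_sigma \<in> hmap n g ` carrier (braid_group n g)"
        using hmap_gen[of n g "Sig 1"] gen_c[OF Sig1] gv_simps(1) by (metis image_eqI)
      fix j assume j: "j \<in> {1..g}"
      show "sd_a j \<in> hmap n g ` carrier (braid_group n g) \<and> sd_b j \<in> hmap n g ` carrier (braid_group n g)"
        using hmap_gen[of n g "A j"] gen_c[OF bgens_A[OF j]] gv_simps(2)[OF j]
          hmap_gen[of n g "B j"] gen_c[OF bgens_B[OF j]] gv_simps(3)[OF j] by (metis image_eqI)
    qed
  qed
  define \<phi> where "\<phi> = (\<lambda>P. the_elem (hmap n g ` P))"
  have iso: "\<phi> \<in> iso (braid_group n g Mod NN) (sd_group g)"
    using H.FactGroup_iso_set[OF surj] unfolding \<phi>_def K .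
  have phx: "\<phi> (NN #>\<^bsub>braid_group n g\<^esub> x) = hmap n g x" if "x \<in> carrier (braid_group n g)" for x
    using hmap_coset[OF that] unfolding \<phi>_def K by simp
  have sig: "NN #>\<^bsub>braid_group n g\<^esub> bclass n g (Sig i) = sq" if "1 \<le> i" "i \<le> n - 1" for i
    using QSig[OF that] by (simp add: bclass_gen)
  show ?thesis
    unfolding Let_def Gam
  proof (intro conjI allI impI exI[of _ \<phi>])
    fix i j assume "1 \<le> i \<and> i \<le> n - 1 \<and> 1 \<le> j \<and> j \<le> n - 1"
    then show "NN #>\<^bsub>braid_group n g\<^esub> bclass n g (Sig i) = NN #>\<^bsub>braid_group n g\<^esub> bclass n g (Sig j)"
      using sig by auto
  next
    show "\<phi> \<in> iso (braid_group n g Mod NN) (sd_group g)" by (rule iso)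
  next
    fix i assume i: "1 \<le> i \<and> i \<le> n - 1"
    then have "Sig i \<in> bgens n g" by (simp add: bgens_def)
    then show "\<phi> (NN #>\<^bsub>braid_group n g\<^esub> bclass n g (Sig i)) = sd_sigma"
      by (simp add: bclass_gen phx gen_c hmap_gen gv_simps)
  next
    fix l assume l: "1 \<le> l \<and> l \<le> g"
    then have l': "l \<in> {1..g}" by simp
    show "\<phi> (NN #>\<^bsub>braid_group n g\<^esub> bclass n g (A l)) = sd_a l"
      using l' by (simp add: bclass_gen phx gen_c bgens_A hmap_gen gv_simps del: atLeastAtMost_iff)
    show "\<phi> (NN #>\<^bsub>braid_group n g\<^esub> bclass n g (B l)) = sd_b l"
      using l' by (simp add: bclass_gen phx gen_c bgens_B hmap_gen gv_simps del: atLeastAtMost_iff)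
  qed
qed


end
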